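(* In the setting of the context, let $y\in\mathbb{R}^n$ satisfy $$F(y)-F^\star\le\frac{\lambda_{\min}(M^x)}{\sigma^2}\min\Big\{\frac{\eta^2}{4L},\ \frac{\delta^2\lambda_{\min}(M)}{2(1+\delta)^2L^2}\big(F(\mathcal{G}_F(\bar x))-F^\star\big)\Big\}.$$ Then $\tilde x:=\mathcal{G}_F(y)$ satisfies $$\operatorname{dist}(0,\partial F(\tilde x))\le\frac{\sqrt{\lambda_{\min}(M^x)}}{\sigma}\min\big\{\eta,\ \delta\|(\tilde x,\Lambda(\tilde x,\bar\lambda,\sigma))-(\bar x,\bar\lambda)\|_M\big\}.$$
   Context: Problem $\min_{x\in\mathbb{R}^n}f_0(x)+g(x)+h(Ax)$ with $A\in\mathbb{R}^{m\times n}$, $f_0:\mathbb{R}^n\to\mathbb{R}$ convex and differentiable with $L_0$-Lipschitz gradient, $g,h$ proper closed convex; $h^*$ is the Fenchel conjugate of $h$. Lagrangian $\ell(x,\lambda)=f_0(x)+g(x)+\langle Ax,\lambda\rangle-h^*(\lambda)$; $T_\ell(x,\lambda)=\{(v,u):v\in\nabla f_0(x)+\partial g(x)+A^\top\lambda,\ u\in\partial h^*(\lambda)-Ax\}$ (maximal monotone on $\mathbb{R}^{n+m}$), and $\Omega:=T_\ell^{-1}(0,0)\ne\emptyset$. $M=\operatorname{diag}(M^x,M^\lambda)$ with $M^x,M^\lambda$ symmetric positive definite and $\lambda_{\max}(M)=1$; $\|v\|_P=\sqrt{v^\top Pv}$. Fix $\bar x\in\mathbb{R}^n$, $\bar\lambda\in\mathbb{R}^m$,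 $\sigma>0$, $\eta>0$, $\delta>0$. Define $\psi(u)=\max_\lambda\{\langle u,\lambda\rangle-h^*(\lambda)-\frac{1}{2\sigma}\|\lambda-\bar\lambda\|^2_{M^\lambda}\}$, $\Lambda(x,\bar\lambda,\sigma)=\arg\max_\lambda\{\ell(x,\lambda)-\frac{1}{2\sigma}\|\lambda-\bar\lambda\|^2_{M^\lambda}\}$, $F(x)=f(x)+\phi(x)$ with $f(x)=f_0(x)+\psi(Ax)$, $\phi(x)=g(x)+\frac{1}{2\sigma}\|x-\bar x\|^2_{M^x}$, $F^\star=\min F$, $L:=L_0+\frac{\sigma}{\lambda_{\min}(M^\lambda)}\|A\|^2$, and $\mathcal{G}_F(x)=\arg\min_y\{\frac L2\|y-(x-\frac1L\nabla f(x))\|^2+\phi(y)\}$. *)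

theory Defs
  imports "HOL-Analysis.Analysis"
begin

definition pnorm :: "real^'k^'k \<Rightarrow> real^'k \<Rightarrow> real" where
  "pnorm P v = sqrt (v \<bullet> (P *v v))"

definition sym_pd :: "real^'k^'k \<Rightarrow> bool" where
  "sym_pd P \<longleftrightarrow> transpose P = P \<and> (\<forall>v. v \<noteq> 0 \<longrightarrow> 0 < v \<bullet> (P *v v))"

definition eigvals :: "real^'k^'k \<Rightarrow> real set" where
  "eigvals P = {\<mu>. \<exists>v. v \<noteq> 0 \<and> P *v v = \<mu> *\<^sub>R v}"

definition lam_min :: "real^'k^'k \<Rightarrow> real" where
  "lam_min P = Inf (eigvals P)"

definition lam_max :: "real^'k^'k \<Rightarrow> real" where
  "lam_max P = Sup (eigvals P)"

definition blockdiag :: "real^'n^'n \<Rightarrow> real^'m^'m \<Rightarrow> real^('n + 'm)^('n + 'm)" where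
  "blockdiag P Q = (\<chi> i j. (case (i, j) of
       (Inl a, Inl b) \<Rightarrow> P $ a $ b
     | (Inr a, Inr b) \<Rightarrow> Q $ a $ b
     | _ \<Rightarrow> 0))"

definition stack :: "real^'n \<Rightarrow> real^'m \<Rightarrow> real^('n + 'm)" where
  "stack x l = (\<chi> i. (case i of Inl a \<Rightarrow> x $ a | Inr b \<Rightarrow> l $ b))"

definition proper_closed_convex :: "('a::{real_vector,topological_space} \<Rightarrow> ereal) \<Rightarrow> bool" where
  "proper_closed_convex g \<longleftrightarrow>
     (\<forall>x. g x \<noteq> -\<infinity>) \<and> (\<exists>x. g x \<noteq> \<infinity>) \<and>
     convex {(x, t::real). g x \<le> ereal t} \<and> closed {(x, t::real). g x \<le> ereal t}"

definition fconj :: "('a::real_inner \<Rightarrow> ereal) \<Rightarrow> 'a \<Rightarrow> ereal" where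
  "fconj h l = (SUP u. ereal (u \<bullet> l) - h u)"

definition subgrad :: "('a::real_inner \<Rightarrow> ereal) \<Rightarrow> 'a \<Rightarrow> 'a set" where
  "subgrad F x = {v. \<bar>F x\<bar> \<noteq> \<infinity> \<and> (\<forall>z. F x + ereal (v \<bullet> (z - x)) \<le> F z)}"

definition grad :: "('a::real_inner \<Rightarrow> real) \<Rightarrow> 'a \<Rightarrow> 'a" where
  "grad f x = (THE d. (f has_derivative (\<lambda>v. d \<bullet> v)) (at x))"

definition lagr :: "(real^'n \<Rightarrow> real) \<Rightarrow> (real^'n \<Rightarrow> ereal) \<Rightarrow> (real^'m \<Rightarrow> ereal)
     \<Rightarrow> real^'n^'m \<Rightarrow> real^'n \<Rightarrow> real^'m \<Rightarrow> ereal" where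
  "lagr f0 g h A x l = ereal (f0 x) + g x + ereal ((A *v x) \<bullet> l) - fconj h l"

definition psi :: "(real^'m \<Rightarrow> ereal) \<Rightarrow> real^'m^'m \<Rightarrow> real^'m \<Rightarrow> real \<Rightarrow> real^'m \<Rightarrow> real" where
  "psi h Ml lbar \<sigma> u = real_of_ereal
     (SUP l. ereal (u \<bullet> l) - fconj h l - ereal ((pnorm Ml (l - lbar))\<^sup>2 / (2 * \<sigma>)))"

definition Lam :: "(real^'n \<Rightarrow> real) \<Rightarrow> (real^'n \<Rightarrow> ereal) \<Rightarrow> (real^'m \<Rightarrow> ereal)
     \<Rightarrow> real^'n^'m \<Rightarrow> real^'m^'m \<Rightarrow> real^'n \<Rightarrow> real^'m \<Rightarrow> real \<Rightarrow> real^'m" where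
  "Lam f0 g h A Ml x lbar \<sigma> = (THE l. \<forall>\<mu>.
      lagr f0 g h A x \<mu> - ereal ((pnorm Ml (\<mu> - lbar))\<^sup>2 / (2 * \<sigma>))
        \<le> lagr f0 g h A x l - ereal ((pnorm Ml (l - lbar))\<^sup>2 / (2 * \<sigma>)))"

definition fsm :: "(real^'n \<Rightarrow> real) \<Rightarrow> (real^'m \<Rightarrow> ereal) \<Rightarrow> real^'n^'m
     \<Rightarrow> real^'m^'m \<Rightarrow> real^'m \<Rightarrow> real \<Rightarrow> real^'n \<Rightarrow> real" where
  "fsm f0 h A Ml lbar \<sigma> x = f0 x + psi h Ml lbar \<sigma> (A *v x)"

definition phin :: "(real^'n \<Rightarrow> ereal) \<Rightarrow> real^'n^'n \<Rightarrow> real^'n \<Rightarrow> real \<Rightarrow> real^'n \<Rightarrow> ereal" where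
  "phin g Mx xbar \<sigma> x = g x + ereal ((pnorm Mx (x - xbar))\<^sup>2 / (2 * \<sigma>))"

definition GF :: "real \<Rightarrow> (real^'n \<Rightarrow> real) \<Rightarrow> (real^'n \<Rightarrow> ereal) \<Rightarrow> real^'n \<Rightarrow> real^'n" where
  "GF L f phi x = (THE y. \<forall>z.
      ereal (L / 2 * (norm (y - (x - (1 / L) *\<^sub>R grad f x)))\<^sup>2) + phi y
        \<le> ereal (L / 2 * (norm (z - (x - (1 / L) *\<^sub>R grad f x)))\<^sup>2) + phi z)"

definition Fobj :: "(real^'n \<Rightarrow> real) \<Rightarrow> (real^'n \<Rightarrow> ereal) \<Rightarrow> (real^'m \<Rightarrow> ereal)
     \<Rightarrow> real^'n^'m \<Rightarrow> real^'n^'n \<Rightarrow> real^'m^'m \<Rightarrow> real^'n \<Rightarrow> real^'m \<Rightarrow> real \<Rightarrow> real^'n \<Rightarrow> ereal" where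
  "Fobj f0 g h A Mx Ml xbar lbar \<sigma> x = ereal (fsm f0 h A Ml lbar \<sigma> x) + phin g Mx xbar \<sigma> x"

end

theory Submission
  imports Defs
begin

lemma sym_inner:
  fixes P :: "real^'k^'k"
  assumes "transpose P = P" shows "x \<bullet> (P *v y) = (P *v x) \<bullet> y"
proof -
  have "x \<bullet> (P *v y) = (x v* P) \<bullet> y" by (rule dot_lmul_matrix[symmetric])
  also have "x v* P = transpose P *v x" by (simp add: transpose_matrix_vector)
  also have "\<dots> = P *v x" using assms by simp
  finally show ?thesis .
qed

lemma quad_expand:
  fixes P :: "real^'k^'k"
  assumes "transpose P = P"
  shows "(a + d) \<bullet> (P *v (a + d)) = a \<bullet> (P *v a) + 2 * ((P *v a) \<bullet> d) + d \<bullet> (P *v d)"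
  using sym_inner[OF assms, of a d] sym_inner[OF assms, of d a]
  by (simp add: matrix_vector_right_distrib inner_add_left inner_add_right inner_commute)

lemma quad_zero:
  fixes a b :: real
  assumes "\<forall>t. 0 \<le> a * t + b * t\<^sup>2" shows "a = 0"
proof (rule ccontr)
  assume a0: "a \<noteq> 0"
  define c where "c = \<bar>b\<bar> + 1"
  have cpos: "c > 0" by (simp add: c_def)
  define t where "t = - a / c"
  have ct: "c * t = - a" using cpos by (simp add: t_def)
  have "c\<^sup>2 * (a * t + b * t\<^sup>2) = a * c * (c * t) + b * (c * t) * (c * t)"
    by (simp add: algebra_simps power2_eq_square)
  also have "\<dots> = a\<^sup>2 * (b - c)" by (simp add: ct algebra_simps power2_eq_square)
  also have "\<dots> < 0" using a0 by (intro mult_pos_neg) (auto simp: c_def)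
  finally have "c\<^sup>2 * (a * t + b * t\<^sup>2) < 0" .
  moreover have "0 \<le> c\<^sup>2 * (a * t + b * t\<^sup>2)" using assms by simp
  ultimately show False by simp
qed

lemma rayleigh:
  fixes P :: "real^'k^'k"
  assumes "sym_pd P"
  shows "lam_min P \<in> eigvals P" "\<And>v. lam_min P * (norm v)\<^sup>2 \<le> v \<bullet> (P *v v)" "0 < lam_min P"
proof -
  have sym: "transpose P = P" and pd: "\<And>v. v \<noteq> 0 \<Longrightarrow> 0 < v \<bullet> (P *v v)"
    using assms by (auto simp: sym_pd_def)
  define Q where "Q v = v \<bullet> (P *v v)" for v :: "real^'k"
  have cQ: "continuous_on UNIV Q"
    unfolding Q_def
    by (intro continuous_intros linear_continuous_on matrix_vector_mul_bounded_linear)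
  have ne: "sphere (0::real^'k) 1 \<noteq> {}"
    by (metis norm_axis_1 mem_sphere_0 empty_iff)
  obtain v0 where v0: "v0 \<in> sphere 0 1" and mn: "\<And>v. v \<in> sphere 0 1 \<Longrightarrow> Q v0 \<le> Q v"
    using continuous_attains_inf[OF compact_sphere ne continuous_on_subset[OF cQ]] by blast
  define m where "m = Q v0"
  have nv0: "norm v0 = 1" using v0 by simp
  have Qs: "Q (c *\<^sub>R v) = c\<^sup>2 * Q v" for c v
    by (simp add: Q_def matrix_vector_mult_scaleR power2_eq_square)
  have c1: "m * (norm w)\<^sup>2 \<le> Q w" for w
  proof (cases "w = 0")
    case True then show ?thesis by (simp add: Q_def)
  next
    case False
    define u where "u = (1 / norm w) *\<^sub>R w"
    have "u \<in> sphere 0 1" using False by (simp add: u_def)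
    then have "m \<le> Q u" using mn m_def by blast
    also have "Q u = Q w / (norm w)\<^sup>2" by (simp add: u_def Qs power2_eq_square field_simps)
    finally show ?thesis using False by (simp add: field_simps)
  qed
  have c2: "w \<bullet> (P *v v0 - m *\<^sub>R v0) = 0" for w
  proof -
    have "\<forall>t. 0 \<le> (2 * (w \<bullet> (P *v v0 - m *\<^sub>R v0))) * t + (Q w - m * (norm w)\<^sup>2) * t\<^sup>2"
    proof
      fix t :: real
      have e1: "Q (v0 + t *\<^sub>R w) = Q v0 + 2 * t * ((P *v v0) \<bullet> w) + t\<^sup>2 * Q w"
        using quad_expand[OF sym, of v0 "t *\<^sub>R w"]
        by (simp add: Q_def matrix_vector_mult_scaleR power2_eq_square)
      have "(norm (v0 + t *\<^sub>R w))\<^sup>2 = (v0 + t *\<^sub>R w) \<bullet> (v0 + t *\<^sub>R w)"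
        by (rule power2_norm_eq_inner)
      also have "\<dots> = v0 \<bullet> v0 + 2 * t * (v0 \<bullet> w) + t\<^sup>2 * (w \<bullet> w)"
        by (simp add: inner_add_left inner_add_right inner_commute power2_eq_square algebra_simps)
      finally have e2: "(norm (v0 + t *\<^sub>R w))\<^sup>2 = 1 + 2 * t * (v0 \<bullet> w) + t\<^sup>2 * (norm w)\<^sup>2"
        using nv0 by (simp add: power2_norm_eq_inner[symmetric])
      have "m * (norm (v0 + t *\<^sub>R w))\<^sup>2 \<le> Q (v0 + t *\<^sub>R w)" by (rule c1)
      then show "0 \<le> (2 * (w \<bullet> (P *v v0 - m *\<^sub>R v0))) * t + (Q w - m * (norm w)\<^sup>2) * t\<^sup>2"
        unfolding e1 e2 m_def
        by (simp add: inner_diff_right inner_commute algebra_simps)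
    qed
    from quad_zero[OF this] show ?thesis by simp
  qed
  have ev: "P *v v0 = m *\<^sub>R v0"
    using c2[of "P *v v0 - m *\<^sub>R v0"] by simp
  have v0nz: "v0 \<noteq> 0" using nv0 by auto
  have meig: "m \<in> eigvals P" using ev v0nz by (auto simp: eigvals_def)
  have lb: "m \<le> \<mu>" if "\<mu> \<in> eigvals P" for \<mu>
  proof -
    from that have "\<exists>v. v \<noteq> 0 \<and> P *v v = \<mu> *\<^sub>R v" by (simp add: eigvals_def)
    then obtain v where v: "v \<noteq> 0" "P *v v = \<mu> *\<^sub>R v" by blast
    have q: "Q v = \<mu> * (v \<bullet> v)" using v(2) by (simp add: Q_def)
    have "m * (v \<bullet> v) \<le> \<mu> * (v \<bullet> v)" using c1[of v] q by (simp add: power2_norm_eq_inner)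
    moreover have "0 < v \<bullet> v" using v(1) by simp
    ultimately show ?thesis by (rule mult_right_le_imp_le)
  qed
  have lm: "lam_min P = m"
    unfolding lam_min_def by (rule cInf_eq_minimum[OF meig lb])
  show "lam_min P \<in> eigvals P" using lm meig by simp
  show "\<And>v. lam_min P * (norm v)\<^sup>2 \<le> v \<bullet> (P *v v)" using lm c1 by (simp add: Q_def)
  show "0 < lam_min P" using lm pd[OF v0nz] by (simp add: m_def Q_def)
qed

lemma sum_UNIV_Plus:
  fixes g :: "('a::finite + 'b::finite) \<Rightarrow> real"
  shows "sum g UNIV = (\<Sum>a\<in>UNIV. g (Inl a)) + (\<Sum>b\<in>UNIV. g (Inr b))"
proof -
  have "sum g UNIV = sum g (UNIV <+> UNIV)" by (simp add: UNIV_Plus_UNIV)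
  also have "\<dots> = sum (g \<circ> Inl) UNIV + sum (g \<circ> Inr) UNIV" by (rule sum.Plus) auto
  finally show ?thesis by (simp add: o_def)
qed

lemma stack_nth [simp]: "stack x l $ Inl a = x $ a" "stack x l $ Inr b = l $ b"
  by (simp_all add: stack_def)

lemma inner_stack: "stack a b \<bullet> stack c d = a \<bullet> c + b \<bullet> d"
  by (simp add: inner_vec_def sum_UNIV_Plus)

lemma stack_surj: "w = stack (\<chi> a. w $ Inl a) (\<chi> b. w $ Inr b)"
  by (simp add: stack_def vec_eq_iff split: sum.split)

lemma stack_diff: "stack a b - stack c d = stack (a - c) (b - d)"
  by (simp add: stack_def vec_eq_iff split: sum.split)

lemma blockdiag_mult: "blockdiag P Q *v stack a b = stack (P *v a) (Q *v b)"
proof (subst vec_eq_iff, intro allI)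
  fix i show "(blockdiag P Q *v stack a b) $ i = stack (P *v a) (Q *v b) $ i"
    by (cases i) (simp_all add: matrix_vector_mult_def blockdiag_def sum_UNIV_Plus stack_def)
qed

lemma stack_scale: "c *\<^sub>R stack a b = stack (c *\<^sub>R a) (c *\<^sub>R b)"
proof (subst vec_eq_iff, intro allI)
  fix i show "(c *\<^sub>R stack a b) $ i = stack (c *\<^sub>R a) (c *\<^sub>R b) $ i"
    by (cases i) simp_all
qed

lemma norm_stack: "(norm (stack a b))\<^sup>2 = (norm a)\<^sup>2 + (norm b)\<^sup>2"
  by (simp add: power2_norm_eq_inner inner_stack)

lemma stack_eq0: "stack a b = 0 \<longleftrightarrow> a = 0 \<and> b = 0"
  by (simp add: stack_def vec_eq_iff split: sum.split) (metis sum.exhaust sum.simps(5) sum.simps(6))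

lemma pnorm_sq:
  assumes "sym_pd P" shows "(pnorm P v)\<^sup>2 = v \<bullet> (P *v v)"
proof -
  have "0 \<le> v \<bullet> (P *v v)" using assms by (cases "v = 0") (auto simp: sym_pd_def less_imp_le)
  then show ?thesis by (simp add: pnorm_def)
qed

lemma lam_M:
  fixes Mx :: "real^'n^'n" and Ml :: "real^'m^'m"
  assumes "sym_pd Mx" "sym_pd Ml"
  shows "lam_min (blockdiag Mx Ml) \<le> lam_min Mx"
    "min (lam_min Mx) (lam_min Ml) \<le> lam_min (blockdiag Mx Ml)"
proof -
  define M where "M = blockdiag Mx Ml"
  have lb: "min (lam_min Mx) (lam_min Ml) \<le> \<mu>" if "\<mu> \<in> eigvals M" for \<mu>
  proof -
    from that have "\<exists>v. v \<noteq> 0 \<and> M *v v = \<mu> *\<^sub>R v" by (simp add: eigvals_def)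
    then obtain w where w: "w \<noteq> 0" "M *v w = \<mu> *\<^sub>R w" by blast
    define a where "a = (\<chi> i. w $ Inl i)"
    define b where "b = (\<chi> i. w $ Inr i)"
    have wab: "w = stack a b" unfolding a_def b_def by (rule stack_surj)
    have "\<mu> * (norm w)\<^sup>2 = w \<bullet> (M *v w)" using w(2) by (simp add: power2_norm_eq_inner)
    also have "\<dots> = a \<bullet> (Mx *v a) + b \<bullet> (Ml *v b)"
      by (simp add: wab M_def blockdiag_mult inner_stack)
    also have "\<dots> \<ge> lam_min Mx * (norm a)\<^sup>2 + lam_min Ml * (norm b)\<^sup>2"
      using rayleigh(2)[OF assms(1), of a] rayleigh(2)[OF assms(2), of b] by linarith
    finally have "lam_min Mx * (norm a)\<^sup>2 + lam_min Ml * (norm b)\<^sup>2 \<le> \<mu> * (norm w)\<^sup>2" .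
    moreover have "min (lam_min Mx) (lam_min Ml) * (norm w)\<^sup>2 \<le> lam_min Mx * (norm a)\<^sup>2 + lam_min Ml * (norm b)\<^sup>2"
    proof -
      have "min (lam_min Mx) (lam_min Ml) * (norm w)\<^sup>2 = min (lam_min Mx) (lam_min Ml) * (norm a)\<^sup>2 + min (lam_min Mx) (lam_min Ml) * (norm b)\<^sup>2"
        by (simp add: wab norm_stack algebra_simps)
      also have "\<dots> \<le> lam_min Mx * (norm a)\<^sup>2 + lam_min Ml * (norm b)\<^sup>2"
        by (intro add_mono mult_right_mono) auto
      finally show ?thesis .
    qed
    ultimately have "min (lam_min Mx) (lam_min Ml) * (norm w)\<^sup>2 \<le> \<mu> * (norm w)\<^sup>2" by linarith
    moreover have "0 < (norm w)\<^sup>2" using w(1) by simp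
    ultimately show ?thesis by (rule mult_right_le_imp_le)
  qed
  obtain v where v: "v \<noteq> 0" "Mx *v v = lam_min Mx *\<^sub>R v"
    using rayleigh(1)[OF assms(1)] unfolding eigvals_def by auto
  have "M *v stack v 0 = lam_min Mx *\<^sub>R stack v 0"
    using v by (simp add: M_def blockdiag_mult stack_scale)
  moreover have "stack v 0 \<noteq> 0" using v(1) by (simp add: stack_eq0)
  ultimately have ein: "lam_min Mx \<in> eigvals M" unfolding eigvals_def by auto
  have bdd: "bdd_below (eigvals M)" using lb by (auto simp: bdd_below_def)
  show "lam_min (blockdiag Mx Ml) \<le> lam_min Mx"
  proof -
    have "Inf (eigvals M) \<le> lam_min Mx" by (rule cInf_lower[OF ein bdd])
    then show ?thesis by (simp add: lam_min_def M_def)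
  qed
  show "min (lam_min Mx) (lam_min Ml) \<le> lam_min (blockdiag Mx Ml)"
  proof -
    have "min (lam_min Mx) (lam_min Ml) \<le> Inf (eigvals M)"
      using ein lb by (intro cInf_greatest) auto
    then show ?thesis by (simp add: lam_min_def[of "blockdiag Mx Ml"] M_def)
  qed
qed

lemma pnorm_stack_ge:
  fixes Mx :: "real^'n^'n" and Ml :: "real^'m^'m"
  assumes "sym_pd Mx" "sym_pd Ml"
  shows "sqrt (lam_min Mx) * norm a \<le> pnorm (blockdiag Mx Ml) (stack a b)"
proof -
  have pa: "lam_min Mx * (norm a)\<^sup>2 \<le> a \<bullet> (Mx *v a)" by (rule rayleigh(2)[OF assms(1)])
  have pb: "0 \<le> b \<bullet> (Ml *v b)"
    using assms(2) by (cases "b = 0") (auto simp: sym_pd_def less_imp_le)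
  have "sqrt (lam_min Mx) * norm a = sqrt (lam_min Mx * (norm a)\<^sup>2)"
    by (simp add: real_sqrt_mult)
  also have "\<dots> \<le> sqrt (a \<bullet> (Mx *v a) + b \<bullet> (Ml *v b))"
    using pa pb by (intro real_sqrt_le_mono) linarith
  also have "\<dots> = pnorm (blockdiag Mx Ml) (stack a b)"
    by (simp add: pnorm_def blockdiag_mult inner_stack)
  finally show ?thesis .
qed

lemma transpose_inner:
  fixes A :: "real^'n^'m"
  shows "(A *v x) \<bullet> l = x \<bullet> (transpose A *v l)"
proof -
  have "x \<bullet> (transpose A *v l) = (l v* A) \<bullet> x" by (simp add: transpose_matrix_vector inner_commute)
  also have "\<dots> = l \<bullet> (A *v x)" by (rule dot_lmul_matrix)
  also have "\<dots> = (A *v x) \<bullet> l" by (rule inner_commute)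
  finally show ?thesis by simp
qed

lemma norm_transpose_le:
  fixes A :: "real^'n^'m"
  shows "norm (transpose A *v l) \<le> onorm (\<lambda>x. A *v x) * norm l"
proof -
  define w where "w = transpose A *v l"
  have bl: "bounded_linear (\<lambda>x. A *v x)" by (rule matrix_vector_mul_bounded_linear)
  have "(norm w)\<^sup>2 = (A *v w) \<bullet> l" by (simp add: transpose_inner w_def power2_norm_eq_inner)
  also have "\<dots> \<le> norm (A *v w) * norm l" by (rule Cauchy_Schwarz_ineq2[THEN order_trans[OF abs_ge_self]])
  also have "\<dots> \<le> onorm (\<lambda>x. A *v x) * norm w * norm l"
    using onorm[OF bl, of w] by (simp add: mult_right_mono)
  finally have *: "norm w * norm w \<le> (onorm (\<lambda>x. A *v x) * norm l) * norm w"
    by (simp add: power2_eq_square algebra_simps)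
  show ?thesis
  proof (cases "w = 0")
    case True then show ?thesis using onorm_pos_le[OF bl] by (simp add: w_def)
  next
    case False then show ?thesis using * by (simp add: w_def)
  qed
qed

lemma small_t:
  fixes a b c :: real
  assumes "\<And>t. 0 < t \<Longrightarrow> t \<le> 1 \<Longrightarrow> a \<le> b + t * c"
  shows "a \<le> b"
proof (cases "c \<le> 0")
  case True then show ?thesis using assms[of 1] by simp
next
  case False
  show ?thesis
  proof (rule ccontr)
    assume "\<not> a \<le> b"
    then have ab: "a > b" by simp
    define t where "t = min 1 ((a - b) / (2 * c))"
    have t0: "0 < t" using ab False by (simp add: t_def)
    have t1: "t \<le> 1" by (simp add: t_def)
    have "t * c \<le> (a - b) / (2 * c) * c" using False by (intro mult_right_mono) (auto simp: t_def)
    also have "\<dots> = (a - b) / 2" using False by (simp add: field_simps)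
    finally have "b + t * c < a" using ab by simp
    then show False using assms[OF t0 t1] by simp
  qed
qed

lemma convex_epi_ineq:
  fixes g :: "'a::real_vector \<Rightarrow> ereal"
  assumes "convex {(x, t::real). g x \<le> ereal t}" "g x \<le> ereal a" "g y \<le> ereal b" "0 \<le> t" "t \<le> 1"
  shows "g ((1 - t) *\<^sub>R x + t *\<^sub>R y) \<le> ereal ((1 - t) * a + t * b)"
proof -
  have "(1 - t) *\<^sub>R (x, a) + t *\<^sub>R (y, b) \<in> {(x, t::real). g x \<le> ereal t}"
    using assms by (intro convexD[OF assms(1)]) auto
  then show ?thesis by simp
qed

lemma ereal_add_le_iff: "ereal s + y \<le> ereal t \<longleftrightarrow> y \<le> ereal (t - s)"
  by (cases y) auto

lemma closed_epi_add:
  fixes g :: "'a::real_normed_vector \<Rightarrow> ereal"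
  assumes "closed {(x, t::real). g x \<le> ereal t}" "continuous_on UNIV S"
  shows "closed {(x, t::real). ereal (S x) + g x \<le> ereal t}"
proof -
  have eq: "{(x, t::real). ereal (S x) + g x \<le> ereal t} =
        (\<lambda>p. (fst p, snd p - S (fst p))) -` {(x, t::real). g x \<le> ereal t}"
    by (auto simp: ereal_add_le_iff)
  have "continuous_on UNIV (\<lambda>p::'a \<times> real. (fst p, snd p - S (fst p)))"
    by (intro continuous_intros continuous_on_compose2[OF assms(2)]) auto
  then have "closed ((\<lambda>p. (fst p, snd p - S (fst p))) -` {(x, t::real). g x \<le> ereal t})"
    by (rule closed_vimage[OF assms(1)])
  then show ?thesis unfolding eq .
qed

lemma opt_subgrad:
  fixes g :: "'a::real_inner \<Rightarrow> ereal" and S :: "'a \<Rightarrow> real"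
  assumes cvx: "convex {(x, t::real). g x \<le> ereal t}"
    and ninf: "\<And>x. g x \<noteq> -\<infinity>"
    and fin: "g xh = ereal gh"
    and mn: "\<And>z. ereal (S xh) + g xh \<le> ereal (S z) + g z"
    and ex: "\<And>t. 0 < t \<Longrightarrow> t \<le> 1 \<Longrightarrow> S (xh + t *\<^sub>R (z - xh)) \<le> S xh + t * (D \<bullet> (z - xh)) + t\<^sup>2 * C"
  shows "ereal (gh - D \<bullet> (z - xh)) \<le> g z"
proof (cases "g z")
  case PInf then show ?thesis by simp
next
  case MInf then show ?thesis using ninf by simp
next
  case (real b)
  have "gh - b \<le> D \<bullet> (z - xh) + t * C" if t: "0 < t" "t \<le> 1" for t
  proof -
    define xt where "xt = xh + t *\<^sub>R (z - xh)"
    have xt': "xt = (1 - t) *\<^sub>R xh + t *\<^sub>R z" by (simp add: xt_def algebra_simps)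
    have gxt: "g xt \<le> ereal ((1 - t) * gh + t * b)"
      unfolding xt' using t fin real by (intro convex_epi_ineq[OF cvx]) auto
    have "ereal (S xh + gh) \<le> ereal (S xt) + g xt" using mn[of xt] fin by simp
    also have "\<dots> \<le> ereal (S xt) + ereal ((1 - t) * gh + t * b)" using gxt by (rule add_left_mono)
    finally have "S xh + gh \<le> S xt + ((1 - t) * gh + t * b)" by simp
    moreover have "S xt \<le> S xh + t * (D \<bullet> (z - xh)) + t\<^sup>2 * C" unfolding xt_def using ex t by simp
    ultimately have "t * (gh - b) \<le> t * (D \<bullet> (z - xh) + t * C)"
      by (simp add: algebra_simps power2_eq_square)
    then show ?thesis using t by simp
  qed
  then have "gh - b \<le> D \<bullet> (z - xh)" by (rule small_t)
  then show ?thesis using real by simp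
qed

lemma coercive_R:
  fixes c K K0 v :: real
  assumes c: "c > 0"
  obtains R where "R \<ge> 1" "\<And>r. r > R \<Longrightarrow> c * r\<^sup>2 - K * r - K0 > v"
proof -
  define R where "R = (\<bar>K\<bar> + \<bar>K0\<bar> + \<bar>v\<bar> + 1) / c + 1"
  have R1: "R \<ge> 1" using c by (simp add: R_def)
  have "c * r\<^sup>2 - K * r - K0 > v" if r: "r > R" for r
  proof -
    have r1: "r > 1" using R1 r by simp
    have a1: "c * r > c * R" using c r by simp
    have a2: "c * R \<ge> \<bar>K\<bar> + \<bar>K0\<bar> + \<bar>v\<bar> + 1" using c by (simp add: R_def field_simps)
    from a1 a2 have cr: "c * r - \<bar>K\<bar> > \<bar>K0\<bar> + \<bar>v\<bar> + 1" by simp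
    have "r * (c * r - \<bar>K\<bar>) \<ge> 1 * (c * r - \<bar>K\<bar>)"
      using r1 cr by (intro mult_right_mono) auto
    then have "r * (c * r - \<bar>K\<bar>) > \<bar>K0\<bar> + \<bar>v\<bar> + 1" using cr by simp
    moreover have "K * r \<le> \<bar>K\<bar> * r" using r1 by (intro mult_right_mono) auto
    ultimately show ?thesis by (simp add: power2_eq_square algebra_simps)
  qed
  then show ?thesis using R1 that by blast
qed

lemma exists_min:
  fixes \<Phi> :: "'a::euclidean_space \<Rightarrow> ereal"
  assumes cl: "closed {(x, t::real). \<Phi> x \<le> ereal t}"
    and fin: "\<Phi> x0 \<noteq> \<infinity>"
    and lbd: "\<And>x. ereal (c * (norm x)\<^sup>2 - K * norm x - K0) \<le> \<Phi> x"
    and c: "c > 0"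
  shows "\<exists>x. \<forall>z. \<Phi> x \<le> \<Phi> z"
proof -
  have "\<Phi> x0 \<noteq> -\<infinity>" using lbd[of x0] by auto
  then obtain v0 where v0: "\<Phi> x0 = ereal v0" using fin by (cases "\<Phi> x0") auto
  obtain R where R1: "R \<ge> 1" and R: "\<And>r. r > R \<Longrightarrow> c * r\<^sup>2 - K * r - K0 > v0"
    using coercive_R[OF c] by blast
  have inball: "norm x \<le> R" if "\<Phi> x \<le> ereal v0" for x
  proof (rule ccontr)
    assume "\<not> norm x \<le> R"
    then have "c * (norm x)\<^sup>2 - K * norm x - K0 > v0" using R by simp
    then have "ereal v0 < ereal (c * (norm x)\<^sup>2 - K * norm x - K0)" by simp
    then have "ereal v0 < \<Phi> x" using lbd[of x] by (rule less_le_trans)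
    then show False using that by simp
  qed
  define B where "B = \<bar>K\<bar> * R + \<bar>K0\<bar>"
  have lowb: "- B \<le> c * (norm x)\<^sup>2 - K * norm x - K0" if "norm x \<le> R" for x
  proof -
    have "K * norm x \<le> \<bar>K\<bar> * norm x" by (intro mult_right_mono) auto
    also have "\<dots> \<le> \<bar>K\<bar> * R" using that by (intro mult_left_mono) auto
    finally have "K * norm x \<le> \<bar>K\<bar> * R" .
    moreover have "0 \<le> c * (norm x)\<^sup>2" using c by simp
    ultimately show ?thesis by (simp add: B_def)
  qed
  define T where "T = {p::'a \<times> real. \<Phi> (fst p) \<le> ereal (snd p) \<and> norm (fst p) \<le> R \<and> snd p \<le> v0}"
  have "closed T"
  proof -
    have "T = {(x, t::real). \<Phi> x \<le> ereal t} \<inter> ({p. norm (fst p) \<le> R} \<inter> {p. snd p \<le> v0})"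
      by (auto simp: T_def)
    moreover have "closed {p::'a \<times> real. norm (fst p) \<le> R}"
      by (intro closed_Collect_le continuous_intros)
    moreover have "closed {p::'a \<times> real. snd p \<le> v0}"
      by (intro closed_Collect_le continuous_intros)
    ultimately show ?thesis using cl by (simp add: closed_Int)
  qed
  moreover have "bounded T"
  proof -
    have "norm p \<le> R + (B + \<bar>v0\<bar>)" if "p \<in> T" for p
    proof -
      obtain x t where p: "p = (x, t)" by fastforce
      have x: "norm x \<le> R" and t: "t \<le> v0" and ph: "\<Phi> x \<le> ereal t" using that by (auto simp: T_def p)
      have "ereal (- B) \<le> ereal t" using lowb[OF x] lbd[of x] ph by (meson ereal_less_eq(3) order_trans)
      then have "- B \<le> t" by simp
      moreover have "B \<ge> 0" using R1 by (simp add: B_def)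
      ultimately have "\<bar>t\<bar> \<le> B + \<bar>v0\<bar>" using t by arith
      then show ?thesis using x norm_Pair_le[of x t] by (simp add: p)
    qed
    then show ?thesis unfolding bounded_iff by blast
  qed
  ultimately have "compact T" by (simp add: compact_eq_bounded_closed)
  moreover have "(x0, v0) \<in> T" using v0 inball[of x0] by (simp add: T_def)
  then have "T \<noteq> {}" by blast
  ultimately obtain p1 where p1: "p1 \<in> T" and p1m: "\<And>p. p \<in> T \<Longrightarrow> snd p1 \<le> snd p"
    using continuous_attains_inf[of T snd] continuous_on_snd[OF continuous_on_id] by blast
  have "\<Phi> (fst p1) \<le> \<Phi> z" for z
  proof (cases "\<Phi> z \<le> ereal v0")
    case False
    have "\<Phi> (fst p1) \<le> ereal (snd p1)" "snd p1 \<le> v0" using p1 by (auto simp: T_def)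
    then have "\<Phi> (fst p1) \<le> ereal v0" using order_trans ereal_less_eq(3) by blast
    then show ?thesis using False by simp
  next
    case True
    have "\<Phi> z \<noteq> -\<infinity>" using lbd[of z] by auto
    moreover have "\<Phi> z \<noteq> \<infinity>" using True by auto
    ultimately obtain r where r: "\<Phi> z = ereal r" by (cases "\<Phi> z") auto
    have "(z, r) \<in> T" using True r inball[OF True] by (simp add: T_def)
    then have "snd p1 \<le> r" using p1m by fastforce
    moreover have "\<Phi> (fst p1) \<le> ereal (snd p1)" using p1 by (simp add: T_def)
    ultimately show ?thesis using r by (simp add: order_trans)
  qed
  then show ?thesis by blast
qed

lemma grad_has_deriv:
  fixes f :: "'a::euclidean_space \<Rightarrow> real"
  assumes "f differentiable (at x)"
  shows "(f has_derivative (\<lambda>v. grad f x \<bullet> v)) (at x)"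
proof -
  obtain f' where d: "(f has_derivative f') (at x)" using assms by (auto simp: differentiable_def)
  have lin: "linear f'" using has_derivative_bounded_linear[OF d] by (rule bounded_linear.linear)
  define D where "D = (\<Sum>i\<in>Basis. f' i *\<^sub>R i)"
  have fD: "f' v = D \<bullet> v" for v
  proof -
    have "f' v = (\<Sum>i\<in>Basis. f' i * (v \<bullet> i))"
      using Linear_Algebra.linear_componentwise[OF lin, of v 1] by (simp add: mult.commute)
    also have "\<dots> = D \<bullet> v" unfolding D_def inner_sum_left by (simp add: inner_commute)
    finally show ?thesis .
  qed
  have dD: "(f has_derivative (\<lambda>v. D \<bullet> v)) (at x)"
    using d by (simp add: fD[abs_def])
  have "grad f x = D"
    unfolding grad_def
  proof (rule the_equality)
    show "(f has_derivative (\<lambda>v. D \<bullet> v)) (at x)" by (rule dD)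
  next
    fix d' assume "(f has_derivative (\<lambda>v. d' \<bullet> v)) (at x)"
    then have "(\<lambda>v. d' \<bullet> v) = (\<lambda>v. D \<bullet> v)" using dD by (rule has_derivative_unique)
    then have "d' \<bullet> (d' - D) = D \<bullet> (d' - D)" by metis
    then have "(d' - D) \<bullet> (d' - D) = 0" by (simp add: inner_diff_left)
    then show "d' = D" by simp
  qed
  then show ?thesis using dD by simp
qed

lemma deriv_line:
  fixes f :: "'a::euclidean_space \<Rightarrow> real"
  assumes "\<forall>x. f differentiable (at x)"
  shows "((\<lambda>t. f (x + t *\<^sub>R d)) has_real_derivative (grad f (x + t *\<^sub>R d) \<bullet> d)) (at t)"
proof -
  have "((\<lambda>t. x + t *\<^sub>R d) has_derivative (\<lambda>s. s *\<^sub>R d)) (at t)"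
    by (auto intro!: derivative_eq_intros)
  from has_derivative_compose[OF this grad_has_deriv[OF assms[rule_format]]]
  have "((\<lambda>t. f (x + t *\<^sub>R d)) has_derivative (\<lambda>s. grad f (x + t *\<^sub>R d) \<bullet> (s *\<^sub>R d))) (at t)" .
  moreover have "(\<lambda>s. grad f (x + t *\<^sub>R d) \<bullet> (s *\<^sub>R d)) = (*) (grad f (x + t *\<^sub>R d) \<bullet> d)"
    by (auto simp: mult.commute)
  ultimately show ?thesis by (simp add: has_field_derivative_def)
qed

lemma taylor2:
  fixes f :: "'a::euclidean_space \<Rightarrow> real"
  assumes dif: "\<forall>x. f differentiable (at x)"
    and lip: "\<forall>x z. norm (grad f x - grad f z) \<le> L * norm (x - z)"
  shows "f (x + d) \<le> f x + grad f x \<bullet> d + L / 2 * (norm d)\<^sup>2"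
    and "f x + grad f x \<bullet> d - L / 2 * (norm d)\<^sup>2 \<le> f (x + d)"
proof -
  define c where "c = grad f x \<bullet> d"
  define nd where "nd = (norm d)\<^sup>2"
  have gb: "\<bar>grad f (x + t *\<^sub>R d) \<bullet> d - c\<bar> \<le> L * t * nd" if "0 \<le> t" for t
  proof -
    have "\<bar>grad f (x + t *\<^sub>R d) \<bullet> d - c\<bar> = \<bar>(grad f (x + t *\<^sub>R d) - grad f x) \<bullet> d\<bar>"
      by (simp add: c_def inner_diff_left)
    also have "\<dots> \<le> norm (grad f (x + t *\<^sub>R d) - grad f x) * norm d" by (rule Cauchy_Schwarz_ineq2)
    also have "\<dots> \<le> L * norm (t *\<^sub>R d) * norm d"
    proof (rule mult_right_mono)
      have "norm (grad f (x + t *\<^sub>R d) - grad f x) \<le> L * norm ((x + t *\<^sub>R d) - x)" using lip by blast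
      then show "norm (grad f (x + t *\<^sub>R d) - grad f x) \<le> L * norm (t *\<^sub>R d)" by simp
    qed simp
    also have "\<dots> = L * t * nd" using that by (simp add: nd_def power2_eq_square)
    finally show ?thesis .
  qed
  have d1: "((\<lambda>t. t * c) has_real_derivative c) (at t)" for t
    by (auto intro!: derivative_eq_intros)
  have d2: "((\<lambda>t. L / 2 * t\<^sup>2 * nd) has_real_derivative L * t * nd) (at t)" for t
    by (auto intro!: derivative_eq_intros)
  define k1 where "k1 t = f (x + t *\<^sub>R d) - t * c - L / 2 * t\<^sup>2 * nd" for t
  define k2 where "k2 t = f (x + t *\<^sub>R d) - t * c + L / 2 * t\<^sup>2 * nd" for t
  have dk1: "(k1 has_real_derivative (grad f (x + t *\<^sub>R d) \<bullet> d - c - L * t * nd)) (at t)" for t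
    unfolding k1_def[abs_def] by (intro DERIV_diff d1 d2 deriv_line[OF dif])
  have dk2: "(k2 has_real_derivative (grad f (x + t *\<^sub>R d) \<bullet> d - c + L * t * nd)) (at t)" for t
    unfolding k2_def[abs_def] by (intro DERIV_add DERIV_diff d1 d2 deriv_line[OF dif])
  have "k1 1 \<le> k1 0"
  proof (rule DERIV_nonpos_imp_nonincreasing[of 0 1])
    fix t :: real assume "0 \<le> t" "t \<le> 1"
    then show "\<exists>y. (k1 has_real_derivative y) (at t) \<and> y \<le> 0"
      using dk1 gb[of t] by (intro exI[of _ "grad f (x + t *\<^sub>R d) \<bullet> d - c - L * t * nd"]) auto
  qed simp
  then show "f (x + d) \<le> f x + grad f x \<bullet> d + L / 2 * (norm d)\<^sup>2"
    by (simp add: k1_def c_def nd_def)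
  have "k2 0 \<le> k2 1"
  proof (rule DERIV_nonneg_imp_nondecreasing[of 0 1])
    fix t :: real assume "0 \<le> t" "t \<le> 1"
    then show "\<exists>y. (k2 has_real_derivative y) (at t) \<and> 0 \<le> y"
      using dk2 gb[of t] by (intro exI[of _ "grad f (x + t *\<^sub>R d) \<bullet> d - c + L * t * nd"]) auto
  qed simp
  then show "f x + grad f x \<bullet> d - L / 2 * (norm d)\<^sup>2 \<le> f (x + d)"
    by (simp add: k2_def c_def nd_def)
qed

lemma convex_tangent:
  fixes f :: "'a::euclidean_space \<Rightarrow> real"
  assumes cvx: "convex_on UNIV f" and dif: "\<forall>x. f differentiable (at x)"
    and lip: "\<forall>x z. norm (grad f x - grad f z) \<le> L * norm (x - z)"
  shows "f x + grad f x \<bullet> (z - x) \<le> f z"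
proof -
  define w where "w = z - x"
  define G where "G = grad f x \<bullet> w"
  define N where "N = L / 2 * (norm w)\<^sup>2"
  have "G \<le> f z - f x + t * N" if t: "0 < t" "t \<le> 1" for t
  proof -
    have "f ((1 - t) *\<^sub>R x + t *\<^sub>R z) \<le> (1 - t) * f x + t * f z"
      using cvx t unfolding convex_on_def by auto
    moreover have "(1 - t) *\<^sub>R x + t *\<^sub>R z = x + t *\<^sub>R w" by (simp add: w_def algebra_simps)
    ultimately have A: "f (x + t *\<^sub>R w) \<le> f x - t * f x + t * f z" by (simp add: algebra_simps)
    have T: "f x + grad f x \<bullet> (t *\<^sub>R w) - L / 2 * (norm (t *\<^sub>R w))\<^sup>2 \<le> f (x + t *\<^sub>R w)"
      by (rule taylor2(2)[OF dif lip])
    have e1: "L / 2 * (norm (t *\<^sub>R w))\<^sup>2 = t * (t * N)"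
      by (simp add: N_def power2_eq_square)
    have e2: "grad f x \<bullet> (t *\<^sub>R w) = t * G" by (simp add: G_def)
    have B: "f x + t * G - t * (t * N) \<le> f (x + t *\<^sub>R w)" using T unfolding e1 e2 .
    from A B have "t * G \<le> t * (f z - f x + t * N)" by (simp add: algebra_simps)
    then show ?thesis using t by simp
  qed
  then have "G \<le> f z - f x" by (rule small_t)
  then show ?thesis by (simp add: G_def w_def)
qed

lemma grad_eq:
  fixes f :: "'a::euclidean_space \<Rightarrow> real"
  assumes "(f has_derivative (\<lambda>v. D \<bullet> v)) (at x)"
  shows "grad f x = D"
  unfolding grad_def
proof (rule the_equality)
  show "(f has_derivative (\<lambda>v. D \<bullet> v)) (at x)" by (rule assms)
next
  fix d' assume "(f has_derivative (\<lambda>v. d' \<bullet> v)) (at x)"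
  then have "(\<lambda>v. d' \<bullet> v) = (\<lambda>v. D \<bullet> v)" using assms by (rule has_derivative_unique)
  then have "d' \<bullet> (d' - D) = D \<bullet> (d' - D)" by metis
  then have "(d' - D) \<bullet> (d' - D) = 0" by (simp add: inner_diff_left)
  then show "d' = D" by simp
qed

lemma qexp:
  fixes P :: "real^'k^'k"
  assumes "transpose P = P"
  shows "(x + d - a) \<bullet> (P *v (x + d - a)) / (2 * s) =
         (x - a) \<bullet> (P *v (x - a)) / (2 * s) + ((1 / s) *\<^sub>R (P *v (x - a))) \<bullet> d + d \<bullet> (P *v d) / (2 * s)"
proof -
  have e: "x + d - a = (x - a) + d" by (simp add: algebra_simps)
  have "(x + d - a) \<bullet> (P *v (x + d - a)) = (x - a) \<bullet> (P *v (x - a)) + 2 * ((P *v (x - a)) \<bullet> d) + d \<bullet> (P *v d)"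
    unfolding e by (rule quad_expand[OF assms])
  then show ?thesis by (simp add: add_divide_distrib)
qed

lemma quad_nonneg:
  fixes P :: "real^'k^'k"
  assumes "sym_pd P" shows "0 \<le> v \<bullet> (P *v v)"
  using assms by (cases "v = 0") (auto simp: sym_pd_def less_imp_le)

lemma quad_lower:
  fixes P :: "real^'k^'k"
  assumes "sym_pd P" "s > 0"
  shows "lam_min P / (2 * s) * (norm l)\<^sup>2 - (lam_min P / s * norm a) * norm l \<le> (l - a) \<bullet> (P *v (l - a)) / (2 * s)"
proof -
  have lp: "0 < lam_min P" by (rule rayleigh(3)[OF assms(1)])
  have "(norm (l - a))\<^sup>2 = (norm l)\<^sup>2 - 2 * (l \<bullet> a) + (norm a)\<^sup>2"
    by (simp add: power2_norm_eq_inner inner_diff_left inner_diff_right inner_commute)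
  moreover have "l \<bullet> a \<le> norm a * norm l" using norm_cauchy_schwarz[of l a] by (simp add: mult.commute)
  moreover have "0 \<le> (norm a)\<^sup>2" by simp
  ultimately have "(norm l)\<^sup>2 - 2 * (norm a * norm l) \<le> (norm (l - a))\<^sup>2"
    by linarith
  then have "lam_min P * ((norm l)\<^sup>2 - 2 * (norm a * norm l)) \<le> lam_min P * (norm (l - a))\<^sup>2"
    using lp by (intro mult_left_mono) auto
  also have "\<dots> \<le> (l - a) \<bullet> (P *v (l - a))" by (rule rayleigh(2)[OF assms(1)])
  finally have "lam_min P * ((norm l)\<^sup>2 - 2 * (norm a * norm l)) / (2 * s) \<le> (l - a) \<bullet> (P *v (l - a)) / (2 * s)"
    using assms(2) by (intro divide_right_mono) auto
  moreover have "lam_min P * ((norm l)\<^sup>2 - 2 * (norm a * norm l)) / (2 * s) = lam_min P / (2 * s) * (norm l)\<^sup>2 - (lam_min P / s * norm a) * norm l"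
    using assms(2) by (simp add: field_simps)
  ultimately show ?thesis by simp
qed

lemma continuous_quad:
  fixes P :: "real^'k^'k"
  shows "continuous_on UNIV (\<lambda>l. (l - a) \<bullet> (P *v (l - a)))"
proof -
  have c1: "continuous_on UNIV (\<lambda>v::real^'k. v \<bullet> (P *v v))"
    by (intro continuous_intros linear_continuous_on matrix_vector_mul_bounded_linear)
  have c2: "continuous_on UNIV (\<lambda>l::real^'k. l - a)" by (intro continuous_intros)
  show ?thesis using continuous_on_compose2[OF c1 c2] by simp
qed

locale setting =
  fixes f0 :: "real^'n \<Rightarrow> real" and g :: "real^'n \<Rightarrow> ereal" and h :: "real^'m \<Rightarrow> ereal"
    and A :: "real^'n^'m" and L0 :: real
    and Mx :: "real^'n^'n" and Ml :: "real^'m^'m"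
    and xbar :: "real^'n" and lbar :: "real^'m" and \<sigma> :: real
  assumes f0_convex: "convex_on UNIV f0"
    and f0_diff: "\<forall>x. f0 differentiable (at x)"
    and L0_pos: "0 < L0"
    and f0_lip: "\<forall>x z. norm (grad f0 x - grad f0 z) \<le> L0 * norm (x - z)"
    and g_pcc: "proper_closed_convex g" and h_pcc: "proper_closed_convex h"
    and Omega_ne: "\<exists>x l. \<exists>v \<in> subgrad g x. \<exists>u \<in> subgrad (fconj h) l.
                      grad f0 x + v + transpose A *v l = 0 \<and> u - A *v x = 0"
    and Mx_pd: "sym_pd Mx" and Ml_pd: "sym_pd Ml"
    and \<sigma>_pos: "0 < \<sigma>"
begin

lemma Mx_sym: "transpose Mx = Mx" using Mx_pd by (simp add: sym_pd_def)
lemma Ml_sym: "transpose Ml = Ml" using Ml_pd by (simp add: sym_pd_def)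

lemma h_ninf: "h u \<noteq> -\<infinity>" using h_pcc by (simp add: proper_closed_convex_def)
lemma g_ninf: "g u \<noteq> -\<infinity>" using g_pcc by (simp add: proper_closed_convex_def)
lemma g_cvx: "convex {(x, t::real). g x \<le> ereal t}" using g_pcc by (simp add: proper_closed_convex_def)
lemma g_closed: "closed {(x, t::real). g x \<le> ereal t}" using g_pcc by (simp add: proper_closed_convex_def)

lemma hs_lb: "\<exists>u0 c0. \<forall>l. ereal (u0 \<bullet> l - c0) \<le> fconj h l"
proof -
  obtain u0 where "h u0 \<noteq> \<infinity>" using h_pcc by (auto simp: proper_closed_convex_def)
  then obtain c0 where c0: "h u0 = ereal c0" using h_ninf[of u0] by (cases "h u0") auto
  have "ereal (u0 \<bullet> l - c0) \<le> fconj h l" for l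
  proof -
    have "ereal (u0 \<bullet> l) - h u0 \<le> fconj h l" unfolding fconj_def by (rule SUP_upper) simp
    then show ?thesis using c0 by simp
  qed
  then show ?thesis by blast
qed

lemma hs_ninf: "fconj h l \<noteq> -\<infinity>"
proof -
  obtain u0 c0 where "\<forall>l. ereal (u0 \<bullet> l - c0) \<le> fconj h l" using hs_lb by blast
  then have "ereal (u0 \<bullet> l - c0) \<le> fconj h l" by blast
  then show ?thesis by auto
qed

lemma hs_epi: "{(l, t::real). fconj h l \<le> ereal t} = (\<Inter>u. {p. ereal (u \<bullet> fst p) - h u \<le> ereal (snd p)})"
  by (auto simp: fconj_def SUP_le_iff)

lemma hs_piece: "{p::(real^'m) \<times> real. ereal (u \<bullet> fst p) - h u \<le> ereal (snd p)} = UNIV \<or>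
   (\<exists>c. {p::(real^'m) \<times> real. ereal (u \<bullet> fst p) - h u \<le> ereal (snd p)} = {p. (u, -1) \<bullet> p \<le> c})"
proof (cases "h u")
  case (real c)
  then have "{p::(real^'m) \<times> real. ereal (u \<bullet> fst p) - h u \<le> ereal (snd p)} = {p. (u, -1) \<bullet> p \<le> c}"
    by (auto simp: inner_Pair)
  then show ?thesis by blast
next
  case PInf then show ?thesis by auto
next
  case MInf then show ?thesis using h_ninf by simp
qed

lemma hs_cvx: "convex {(l, t::real). fconj h l \<le> ereal t}"
  unfolding hs_epi
proof (rule convex_INT)
  fix u show "convex {p::(real^'m) \<times> real. ereal (u \<bullet> fst p) - h u \<le> ereal (snd p)}"
    using hs_piece[of u] by (auto simp: convex_halfspace_le)
qed

lemma hs_closed: "closed {(l, t::real). fconj h l \<le> ereal t}"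
  unfolding hs_epi
proof (rule closed_INT, intro ballI)
  fix u assume "u \<in> (UNIV::(real^'m) set)" show "closed {p::(real^'m) \<times> real. ereal (u \<bullet> fst p) - h u \<le> ereal (snd p)}"
    using hs_piece[of u] by (auto simp: closed_halfspace_le)
qed

lemma hs_fin: "\<exists>l0. fconj h l0 \<noteq> \<infinity>"
proof -
  obtain l u where "u \<in> subgrad (fconj h) l" using Omega_ne by blast
  then have "\<bar>fconj h l\<bar> \<noteq> \<infinity>" by (simp add: subgrad_def)
  then have "fconj h l \<noteq> \<infinity>" by auto
  then show ?thesis by blast
qed

lemma g_fin: "\<exists>x0. g x0 \<noteq> \<infinity>"
proof -
  obtain x v where "v \<in> subgrad g x" using Omega_ne by blast
  then have "\<bar>g x\<bar> \<noteq> \<infinity>" by (simp add: subgrad_def)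
  then have "g x \<noteq> \<infinity>" by auto
  then show ?thesis by blast
qed

lemma g_aff: "\<exists>b a. \<forall>z. ereal (b \<bullet> z - a) \<le> g z"
proof -
  obtain x0 v where v: "v \<in> subgrad g x0" using Omega_ne by blast
  then have fin: "\<bar>g x0\<bar> \<noteq> \<infinity>" and ineq: "\<And>z. g x0 + ereal (v \<bullet> (z - x0)) \<le> g z"
    by (auto simp: subgrad_def)
  obtain c where c: "g x0 = ereal c" using fin by (cases "g x0") auto
  have "ereal (v \<bullet> z - (v \<bullet> x0 - c)) \<le> g z" for z
  proof -
    have e: "g x0 + ereal (v \<bullet> (z - x0)) = ereal (v \<bullet> z - (v \<bullet> x0 - c))"
      using c by (simp add: inner_diff_right)
    show ?thesis using ineq[of z] by (simp only: e)
  qed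
  then show ?thesis by blast
qed


definition ql :: "real^'m \<Rightarrow> real" where
  "ql l = (l - lbar) \<bullet> (Ml *v (l - lbar)) / (2 * \<sigma>)"

definition Psi :: "real^'m \<Rightarrow> real^'m \<Rightarrow> ereal" where
  "Psi u l = ereal (ql l - u \<bullet> l) + fconj h l"

definition lamf :: "real^'m \<Rightarrow> real^'m" where
  "lamf u = (SOME l. \<forall>z. Psi u l \<le> Psi u z)"

definition hv :: "real^'m \<Rightarrow> real" where
  "hv u = real_of_ereal (fconj h (lamf u))"

lemma ql_cont: "continuous_on UNIV (\<lambda>l. ql l - u \<bullet> l)"
proof -
  have c: "continuous_on UNIV (\<lambda>l. (l - lbar) \<bullet> (Ml *v (l - lbar)))" by (rule continuous_quad)
  have c2: "continuous_on UNIV (\<lambda>l. (l - lbar) \<bullet> (Ml *v (l - lbar)) / (2 * \<sigma>))"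
    using continuous_on_divide[OF c continuous_on_const[of UNIV "2 * \<sigma>"]] \<sigma>_pos by simp
  have c3: "continuous_on UNIV (\<lambda>l. u \<bullet> l)" by (intro continuous_intros)
  show ?thesis unfolding ql_def by (rule continuous_on_diff[OF c2 c3])
qed

lemma Psi_lb: "\<exists>K K0. \<forall>l. ereal (lam_min Ml / (2 * \<sigma>) * (norm l)\<^sup>2 - K * norm l - K0) \<le> Psi u l"
proof -
  obtain u0 c0 where hl: "\<And>l. ereal (u0 \<bullet> l - c0) \<le> fconj h l" using hs_lb by blast
  define K where "K = lam_min Ml / \<sigma> * norm lbar + norm (u0 - u)"
  have "ereal (lam_min Ml / (2 * \<sigma>) * (norm l)\<^sup>2 - K * norm l - c0) \<le> Psi u l" for l
  proof -
    have q: "lam_min Ml / (2 * \<sigma>) * (norm l)\<^sup>2 - (lam_min Ml / \<sigma> * norm lbar) * norm l \<le> ql l"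
      unfolding ql_def by (rule quad_lower[OF Ml_pd \<sigma>_pos])
    have i: "- (norm (u0 - u) * norm l) \<le> (u0 - u) \<bullet> l"
      using norm_cauchy_schwarz[of "u - u0" l] by (simp add: norm_minus_commute inner_diff_left)
    have "lam_min Ml / (2 * \<sigma>) * (norm l)\<^sup>2 - K * norm l - c0 \<le> ql l - u \<bullet> l + (u0 \<bullet> l - c0)"
      using q i by (simp add: K_def algebra_simps inner_diff_left)
    then have "ereal (lam_min Ml / (2 * \<sigma>) * (norm l)\<^sup>2 - K * norm l - c0) \<le> ereal (ql l - u \<bullet> l) + ereal (u0 \<bullet> l - c0)"
      by simp
    also have "\<dots> \<le> Psi u l" unfolding Psi_def by (intro add_left_mono hl)
    finally show ?thesis .
  qed
  then show ?thesis by blast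
qed

lemma Psi_exists: "\<exists>l. \<forall>z. Psi u l \<le> Psi u z"
proof -
  obtain K K0 where lb: "\<And>l. ereal (lam_min Ml / (2 * \<sigma>) * (norm l)\<^sup>2 - K * norm l - K0) \<le> Psi u l"
    using Psi_lb by blast
  obtain l0 where l0: "fconj h l0 \<noteq> \<infinity>" using hs_fin by blast
  show ?thesis
  proof (rule exists_min)
    show "closed {(x, t::real). Psi u x \<le> ereal t}"
      unfolding Psi_def by (rule closed_epi_add[OF hs_closed ql_cont])
    show "Psi u l0 \<noteq> \<infinity>" using l0 hs_ninf[of l0] by (cases "fconj h l0") (auto simp: Psi_def)
    show "\<And>x. ereal (lam_min Ml / (2 * \<sigma>) * (norm x)\<^sup>2 - K * norm x - K0) \<le> Psi u x" by (rule lb)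
    show "0 < lam_min Ml / (2 * \<sigma>)" using rayleigh(3)[OF Ml_pd] \<sigma>_pos by simp
  qed
qed

lemma lamf_min: "Psi u (lamf u) \<le> Psi u z"
  using someI_ex[OF Psi_exists[of u]] unfolding lamf_def by blast

lemma lamf_fin: "fconj h (lamf u) = ereal (hv u)"
proof -
  obtain l0 where l0: "fconj h l0 \<noteq> \<infinity>" using hs_fin by blast
  have "Psi u l0 \<noteq> \<infinity>" using l0 hs_ninf[of l0] by (cases "fconj h l0") (auto simp: Psi_def)
  then have "Psi u (lamf u) \<noteq> \<infinity>" using lamf_min[of u l0] by auto
  then have "fconj h (lamf u) \<noteq> \<infinity>" by (auto simp: Psi_def)
  then show ?thesis using hs_ninf[of "lamf u"] unfolding hv_def by (cases "fconj h (lamf u)") auto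
qed

lemma Phi_eq: "ereal (u \<bullet> l) - fconj h l - ereal (ql l) = - Psi u l"
  using hs_ninf[of l] by (cases "fconj h l") (auto simp: Psi_def)

lemma pnorm_ql: "(pnorm Ml (l - lbar))\<^sup>2 / (2 * \<sigma>) = ql l"
  by (simp add: pnorm_sq[OF Ml_pd] ql_def)

lemma psi_val: "psi h Ml lbar \<sigma> u = u \<bullet> lamf u - hv u - ql (lamf u)"
proof -
  have "(SUP l. ereal (u \<bullet> l) - fconj h l - ereal ((pnorm Ml (l - lbar))\<^sup>2 / (2 * \<sigma>))) = - Psi u (lamf u)"
  proof (rule antisym)
    show "(SUP l. ereal (u \<bullet> l) - fconj h l - ereal ((pnorm Ml (l - lbar))\<^sup>2 / (2 * \<sigma>))) \<le> - Psi u (lamf u)"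
      by (rule SUP_least) (simp add: pnorm_ql Phi_eq lamf_min)
    have "- Psi u (lamf u) = ereal (u \<bullet> lamf u) - fconj h (lamf u) - ereal ((pnorm Ml (lamf u - lbar))\<^sup>2 / (2 * \<sigma>))"
      by (simp add: pnorm_ql Phi_eq)
    also have "\<dots> \<le> (SUP l. ereal (u \<bullet> l) - fconj h l - ereal ((pnorm Ml (l - lbar))\<^sup>2 / (2 * \<sigma>)))"
      by (rule SUP_upper) simp
    finally show "- Psi u (lamf u) \<le> (SUP l. ereal (u \<bullet> l) - fconj h l - ereal ((pnorm Ml (l - lbar))\<^sup>2 / (2 * \<sigma>)))" .
  qed
  then show ?thesis using lamf_fin[of u] by (simp add: psi_def Psi_def)
qed

lemma lam_strong:
  "ereal (u \<bullet> z) - fconj h z - ereal (ql z) \<le>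
     ereal (psi h Ml lbar \<sigma> u - (z - lamf u) \<bullet> (Ml *v (z - lamf u)) / (2 * \<sigma>))"
proof -
  define xh where "xh = lamf u"
  define P where "P = (1 / \<sigma>) *\<^sub>R (Ml *v (xh - lbar))"
  define D where "D = P - u"
  define C where "C = (z - xh) \<bullet> (Ml *v (z - xh)) / (2 * \<sigma>)"
  have qe: "ql (xh + d) = ql xh + P \<bullet> d + d \<bullet> (Ml *v d) / (2 * \<sigma>)" for d
    unfolding ql_def P_def using qexp[OF Ml_sym, of xh d lbar \<sigma>] by simp
  have sub: "ereal (hv u - D \<bullet> (z - xh)) \<le> fconj h z"
  proof (rule opt_subgrad[OF hs_cvx hs_ninf])
    show "fconj h xh = ereal (hv u)" unfolding xh_def by (rule lamf_fin)
    show "\<And>z. ereal (ql xh - u \<bullet> xh) + fconj h xh \<le> ereal (ql z - u \<bullet> z) + fconj h z"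
      using lamf_min[of u] unfolding Psi_def xh_def by blast
    fix t :: real assume "0 < t" "t \<le> 1"
    define w where "w = z - xh"
    have a1: "ql (xh + t *\<^sub>R w) = ql xh + P \<bullet> (t *\<^sub>R w) + (t *\<^sub>R w) \<bullet> (Ml *v (t *\<^sub>R w)) / (2 * \<sigma>)"
      by (rule qe)
    have a2: "P \<bullet> (t *\<^sub>R w) = t * (P \<bullet> w)" by simp
    have a3: "(t *\<^sub>R w) \<bullet> (Ml *v (t *\<^sub>R w)) / (2 * \<sigma>) = t\<^sup>2 * C"
      by (simp add: C_def w_def matrix_vector_mult_scaleR power2_eq_square)
    have a4: "u \<bullet> (xh + t *\<^sub>R w) = u \<bullet> xh + t * (u \<bullet> w)" by (simp add: inner_add_right)
    have a5: "D \<bullet> w = P \<bullet> w - u \<bullet> w" by (simp add: D_def inner_diff_left)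
    have "ql (xh + t *\<^sub>R w) - u \<bullet> (xh + t *\<^sub>R w) = ql xh - u \<bullet> xh + t * (D \<bullet> w) + t\<^sup>2 * C"
      unfolding a1 a2 a3 a4 a5 by (simp add: algebra_simps)
    then have "ql (xh + t *\<^sub>R (z - xh)) - u \<bullet> (xh + t *\<^sub>R (z - xh)) = ql xh - u \<bullet> xh + t * (D \<bullet> (z - xh)) + t\<^sup>2 * C"
      by (simp add: w_def)
    then show "ql (xh + t *\<^sub>R (z - xh)) - u \<bullet> (xh + t *\<^sub>R (z - xh)) \<le> ql xh - u \<bullet> xh + t * (D \<bullet> (z - xh)) + t\<^sup>2 * C"
      by simp
  qed
  have qz: "ql z = ql xh + P \<bullet> (z - xh) + C" using qe[of "z - xh"] by (simp add: C_def)
  have pv: "psi h Ml lbar \<sigma> u = u \<bullet> xh - hv u - ql xh" unfolding xh_def by (rule psi_val)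
  show ?thesis
  proof (cases "fconj h z")
    case PInf then show ?thesis by simp
  next
    case MInf then show ?thesis using hs_ninf[of z] by simp
  next
    case (real r)
    have "hv u - D \<bullet> (z - xh) \<le> r" using sub real by simp
    moreover have "D \<bullet> (z - xh) = P \<bullet> (z - xh) - (u \<bullet> z - u \<bullet> xh)" by (simp add: D_def inner_diff_left inner_diff_right)
    ultimately have "u \<bullet> z - r - ql z \<le> psi h Ml lbar \<sigma> u - C" using qz pv by linarith
    then show ?thesis using real by (simp add: C_def xh_def)
  qed
qed


abbreviation ps :: "real^'m \<Rightarrow> real" where "ps u \<equiv> psi h Ml lbar \<sigma> u"

lemma lml_pos: "0 < lam_min Ml" by (rule rayleigh(3)[OF Ml_pd])

lemma psi_ineq:
  "ps u + (u' - u) \<bullet> lamf u + (lamf u - lamf u') \<bullet> (Ml *v (lamf u - lamf u')) / (2 * \<sigma>) \<le> ps u'"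
proof -
  have "ereal (u' \<bullet> lamf u) - fconj h (lamf u) - ereal (ql (lamf u)) \<le>
     ereal (ps u' - (lamf u - lamf u') \<bullet> (Ml *v (lamf u - lamf u')) / (2 * \<sigma>))"
    by (rule lam_strong)
  then have "u' \<bullet> lamf u - hv u - ql (lamf u) \<le> ps u' - (lamf u - lamf u') \<bullet> (Ml *v (lamf u - lamf u')) / (2 * \<sigma>)"
    by (simp add: lamf_fin)
  moreover have "ps u = u \<bullet> lamf u - hv u - ql (lamf u)" by (rule psi_val)
  moreover have "(u' - u) \<bullet> lamf u = u' \<bullet> lamf u - u \<bullet> lamf u" by (simp add: inner_diff_left)
  ultimately show ?thesis by linarith
qed

lemma psi_tangent: "ps u + (u' - u) \<bullet> lamf u \<le> ps u'"
proof -
  have "0 \<le> (lamf u - lamf u') \<bullet> (Ml *v (lamf u - lamf u')) / (2 * \<sigma>)"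
    using quad_nonneg[OF Ml_pd] \<sigma>_pos by simp
  then show ?thesis using psi_ineq[of u u'] by linarith
qed

lemma lam_basic:
  shows "lam_min Ml * (norm (lamf u - lamf u'))\<^sup>2 / \<sigma> \<le> (u - u') \<bullet> (lamf u - lamf u')"
proof -
  define \<Delta> where "\<Delta> = lamf u - lamf u'"
  define Q where "Q = \<Delta> \<bullet> (Ml *v \<Delta>)"
  have Q': "(lamf u' - lamf u) \<bullet> (Ml *v (lamf u' - lamf u)) = Q"
  proof -
    have "lamf u' - lamf u = - \<Delta>" by (simp add: \<Delta>_def)
    then show ?thesis by (simp add: Q_def vec.neg)
  qed
  have i1: "ps u + (u' - u) \<bullet> lamf u + Q / (2 * \<sigma>) \<le> ps u'" using psi_ineq[of u u'] by (simp add: Q_def \<Delta>_def)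
  have i2: "ps u' + (u - u') \<bullet> lamf u' + Q / (2 * \<sigma>) \<le> ps u" using psi_ineq[of u' u] Q' by simp
  have e: "(u' - u) \<bullet> lamf u + (u - u') \<bullet> lamf u' = - ((u - u') \<bullet> \<Delta>)"
    by (simp add: \<Delta>_def inner_diff_left inner_diff_right algebra_simps)
  have "Q / \<sigma> \<le> (u - u') \<bullet> \<Delta>"
  proof -
    have "Q / (2 * \<sigma>) + Q / (2 * \<sigma>) \<le> (u - u') \<bullet> \<Delta>" using i1 i2 e by linarith
    moreover have "Q / (2 * \<sigma>) + Q / (2 * \<sigma>) = Q / \<sigma>" by (simp add: field_simps)
    ultimately show ?thesis by simp
  qed
  moreover have "lam_min Ml * (norm \<Delta>)\<^sup>2 / \<sigma> \<le> Q / \<sigma>"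
    using rayleigh(2)[OF Ml_pd, of \<Delta>] \<sigma>_pos unfolding Q_def by (intro divide_right_mono) auto
  ultimately show ?thesis by (simp add: \<Delta>_def)
qed

lemma lam_lip: "norm (lamf u - lamf u') \<le> \<sigma> / lam_min Ml * norm (u - u')"
proof (cases "lamf u = lamf u'")
  case True then show ?thesis using \<sigma>_pos lml_pos by simp
next
  case False
  define m where "m = norm (lamf u - lamf u')"
  have m0: "m > 0" using False by (simp add: m_def)
  have "lam_min Ml * m\<^sup>2 / \<sigma> \<le> norm (u - u') * m"
    using lam_basic[of u u'] norm_cauchy_schwarz[of "u - u'" "lamf u - lamf u'"] by (simp add: m_def)
  then have "lam_min Ml * m * m \<le> \<sigma> * norm (u - u') * m"
    using \<sigma>_pos by (simp add: field_simps power2_eq_square)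
  then have "lam_min Ml * m \<le> \<sigma> * norm (u - u')" using m0 by simp
  then show ?thesis using lml_pos by (simp add: m_def field_simps)
qed

lemma amgm: fixes a m k :: real assumes "k > 0" shows "a * m - k / 2 * m\<^sup>2 \<le> a\<^sup>2 / (2 * k)"
proof -
  have "0 \<le> (a - k * m)\<^sup>2 / (2 * k)" using assms by simp
  also have "(a - k * m)\<^sup>2 / (2 * k) = a\<^sup>2 / (2 * k) - (a * m - k / 2 * m\<^sup>2)"
    using assms by (simp add: power2_eq_square field_simps)
  finally show ?thesis by simp
qed

lemma psi_upper: "ps u' \<le> ps u + (u' - u) \<bullet> lamf u + \<sigma> / (2 * lam_min Ml) * (norm (u' - u))\<^sup>2"
proof -
  define \<Delta> where "\<Delta> = lamf u' - lamf u"
  define Q where "Q = \<Delta> \<bullet> (Ml *v \<Delta>)"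
  define k where "k = lam_min Ml / \<sigma>"
  have k0: "k > 0" using lml_pos \<sigma>_pos by (simp add: k_def)
  have i: "ps u' + (u - u') \<bullet> lamf u' + Q / (2 * \<sigma>) \<le> ps u" using psi_ineq[of u' u] by (simp add: Q_def \<Delta>_def)
  have e: "- ((u - u') \<bullet> lamf u') = (u' - u) \<bullet> lamf u + (u' - u) \<bullet> \<Delta>"
    by (simp add: \<Delta>_def inner_diff_left inner_diff_right algebra_simps)
  have c: "(u' - u) \<bullet> \<Delta> \<le> norm (u' - u) * norm \<Delta>" by (rule norm_cauchy_schwarz)
  have q: "k / 2 * (norm \<Delta>)\<^sup>2 \<le> Q / (2 * \<sigma>)"
  proof -
    have "lam_min Ml * (norm \<Delta>)\<^sup>2 / (2 * \<sigma>) \<le> Q / (2 * \<sigma>)"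
      using rayleigh(2)[OF Ml_pd, of \<Delta>] \<sigma>_pos unfolding Q_def by (intro divide_right_mono) auto
    then show ?thesis by (simp add: k_def)
  qed
  have am: "norm (u' - u) * norm \<Delta> - k / 2 * (norm \<Delta>)\<^sup>2 \<le> (norm (u' - u))\<^sup>2 / (2 * k)"
    by (rule amgm[OF k0])
  have "(norm (u' - u))\<^sup>2 / (2 * k) = \<sigma> / (2 * lam_min Ml) * (norm (u' - u))\<^sup>2"
    using lml_pos \<sigma>_pos by (simp add: k_def field_simps)
  then show ?thesis using i e c q am by linarith
qed

lemma psi_deriv: "(ps has_derivative (\<lambda>v. lamf u \<bullet> v)) (at u)"
  unfolding has_derivative_at_alt
proof (intro conjI allI impI)
  show "bounded_linear (\<lambda>v. lamf u \<bullet> v)" by (rule bounded_linear_inner_right)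
  fix e :: real assume e: "e > 0"
  define \<kappa> where "\<kappa> = \<sigma> / (2 * lam_min Ml)"
  have \<kappa>0: "\<kappa> > 0" using lml_pos \<sigma>_pos by (simp add: \<kappa>_def)
  define d where "d = e / (\<kappa> + 1)"
  have d0: "d > 0" using e \<kappa>0 by (simp add: d_def)
  have "norm (ps y - ps u - lamf u \<bullet> (y - u)) \<le> e * norm (y - u)" if y: "norm (y - u) < d" for y
  proof -
    have lo: "0 \<le> ps y - ps u - lamf u \<bullet> (y - u)" using psi_tangent[of u y] by (simp add: inner_commute)
    have up: "ps y - ps u - lamf u \<bullet> (y - u) \<le> \<kappa> * (norm (y - u))\<^sup>2"
      using psi_upper[of y u] by (simp add: inner_commute \<kappa>_def)
    have "\<kappa> * (norm (y - u))\<^sup>2 \<le> \<kappa> * d * norm (y - u)"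
      using y \<kappa>0 by (simp add: power2_eq_square mult_left_mono mult_right_mono less_imp_le mult.assoc)
    also have "\<kappa> * d \<le> e" using e \<kappa>0 by (simp add: d_def field_simps)
    then have "\<kappa> * d * norm (y - u) \<le> e * norm (y - u)" by (intro mult_right_mono) auto
    finally show ?thesis using lo up by simp
  qed
  then show "\<exists>d>0. \<forall>y. norm (y - u) < d \<longrightarrow> norm (ps y - ps u - lamf u \<bullet> (y - u)) \<le> e * norm (y - u)"
    using d0 by blast
qed


abbreviation fs :: "real^'n \<Rightarrow> real" where "fs \<equiv> fsm f0 h A Ml lbar \<sigma>"

definition Lc :: real where "Lc = L0 + \<sigma> / lam_min Ml * (onorm (\<lambda>x. A *v x))\<^sup>2"

definition gradf :: "real^'n \<Rightarrow> real^'n" where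
  "gradf x = grad f0 x + transpose A *v lamf (A *v x)"

lemma onA: "norm (A *v x) \<le> onorm (\<lambda>x. A *v x) * norm x"
  by (rule onorm[OF matrix_vector_mul_bounded_linear])

lemma onA_nonneg: "0 \<le> onorm (\<lambda>x. A *v x)"
  by (rule onorm_pos_le[OF matrix_vector_mul_bounded_linear])

lemma Lc_pos: "0 < Lc"
  using L0_pos lml_pos \<sigma>_pos unfolding Lc_def by (simp add: add_pos_nonneg)

lemma f_deriv: "(fs has_derivative (\<lambda>v. gradf x \<bullet> v)) (at x)"
proof -
  have d0: "(f0 has_derivative (\<lambda>v. grad f0 x \<bullet> v)) (at x)"
    using grad_has_deriv f0_diff by blast
  have dA: "((\<lambda>x. A *v x) has_derivative (\<lambda>v. A *v v)) (at x)"
    by (rule bounded_linear.has_derivative[OF matrix_vector_mul_bounded_linear has_derivative_ident])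
  have d1: "((\<lambda>x. ps (A *v x)) has_derivative (\<lambda>v. lamf (A *v x) \<bullet> (A *v v))) (at x)"
    by (rule has_derivative_compose[OF dA psi_deriv])
  have "(fs has_derivative (\<lambda>v. grad f0 x \<bullet> v + lamf (A *v x) \<bullet> (A *v v))) (at x)"
    unfolding fsm_def[abs_def] by (rule has_derivative_add[OF d0 d1])
  moreover have "(\<lambda>v. grad f0 x \<bullet> v + lamf (A *v x) \<bullet> (A *v v)) = (\<lambda>v. gradf x \<bullet> v)"
    by (rule ext) (simp add: gradf_def inner_add_left inner_add_right transpose_inner inner_commute)
  ultimately show ?thesis by simp
qed

lemma f_grad: "grad fs x = gradf x"
  by (rule grad_eq[OF f_deriv])

lemma f_tangent: "fs x + grad fs x \<bullet> (z - x) \<le> fs z"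
proof -
  have a: "f0 x + grad f0 x \<bullet> (z - x) \<le> f0 z" by (rule convex_tangent[OF f0_convex f0_diff f0_lip])
  have b: "ps (A *v x) + (A *v z - A *v x) \<bullet> lamf (A *v x) \<le> ps (A *v z)" by (rule psi_tangent)
  have c: "(A *v z - A *v x) \<bullet> lamf (A *v x) = (transpose A *v lamf (A *v x)) \<bullet> (z - x)"
    using transpose_inner[of A "z - x" "lamf (A *v x)"] by (simp only: matrix_vector_mult_diff_distrib inner_commute)
  show ?thesis unfolding f_grad gradf_def fsm_def inner_add_left using a b c by linarith
qed

lemma f_descent: "fs (x + d) \<le> fs x + grad fs x \<bullet> d + Lc / 2 * (norm d)\<^sup>2"
proof -
  have a: "f0 (x + d) \<le> f0 x + grad f0 x \<bullet> d + L0 / 2 * (norm d)\<^sup>2"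
    by (rule taylor2(1)[OF f0_diff f0_lip])
  have b: "ps (A *v (x + d)) \<le> ps (A *v x) + (A *v (x + d) - A *v x) \<bullet> lamf (A *v x)
      + \<sigma> / (2 * lam_min Ml) * (norm (A *v (x + d) - A *v x))\<^sup>2"
    by (rule psi_upper)
  have ad: "A *v (x + d) - A *v x = A *v d" by (simp add: matrix_vector_right_distrib)
  have c: "(A *v (x + d) - A *v x) \<bullet> lamf (A *v x) = (transpose A *v lamf (A *v x)) \<bullet> d"
    using transpose_inner[of A d "lamf (A *v x)"] by (simp only: ad inner_commute)
  have N: "(norm (A *v (x + d) - A *v x))\<^sup>2 \<le> (onorm (\<lambda>x. A *v x))\<^sup>2 * (norm d)\<^sup>2"
  proof -
    have "(norm (A *v d))\<^sup>2 \<le> (onorm (\<lambda>x. A *v x) * norm d)\<^sup>2"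
      using onA[of d] by (intro power_mono) auto
    then show ?thesis by (simp only: ad power_mult_distrib)
  qed
  have k0: "0 \<le> \<sigma> / (2 * lam_min Ml)" using lml_pos \<sigma>_pos by simp
  have e: "\<sigma> / (2 * lam_min Ml) * (norm (A *v (x + d) - A *v x))\<^sup>2 \<le>
      \<sigma> / (2 * lam_min Ml) * ((onorm (\<lambda>x. A *v x))\<^sup>2 * (norm d)\<^sup>2)"
    by (rule mult_left_mono[OF N k0])
  have eq: "Lc / 2 * (norm d)\<^sup>2 = L0 / 2 * (norm d)\<^sup>2 + \<sigma> / (2 * lam_min Ml) * ((onorm (\<lambda>x. A *v x))\<^sup>2 * (norm d)\<^sup>2)"
    by (simp add: Lc_def field_simps)
  show ?thesis unfolding f_grad gradf_def fsm_def inner_add_left using a b c e eq by linarith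
qed

lemma f_lip: "norm (grad fs x - grad fs z) \<le> Lc * norm (x - z)"
proof -
  have a: "norm (grad f0 x - grad f0 z) \<le> L0 * norm (x - z)" using f0_lip by blast
  have "norm (transpose A *v lamf (A *v x) - transpose A *v lamf (A *v z))
      = norm (transpose A *v (lamf (A *v x) - lamf (A *v z)))" by (simp add: matrix_vector_mult_diff_distrib)
  also have "\<dots> \<le> onorm (\<lambda>x. A *v x) * norm (lamf (A *v x) - lamf (A *v z))" by (rule norm_transpose_le)
  also have "\<dots> \<le> onorm (\<lambda>x. A *v x) * (\<sigma> / lam_min Ml * norm (A *v x - A *v z))"
    using onA_nonneg lam_lip by (intro mult_left_mono) auto
  also have "\<dots> \<le> onorm (\<lambda>x. A *v x) * (\<sigma> / lam_min Ml * (onorm (\<lambda>x. A *v x) * norm (x - z)))"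
    using onA_nonneg lml_pos \<sigma>_pos onA[of "x - z"]
    by (intro mult_left_mono) (auto simp: matrix_vector_mult_diff_distrib)
  finally have b: "norm (transpose A *v lamf (A *v x) - transpose A *v lamf (A *v z))
      \<le> \<sigma> / lam_min Ml * (onorm (\<lambda>x. A *v x))\<^sup>2 * norm (x - z)"
    by (simp add: power2_eq_square algebra_simps)
  have "norm (grad fs x - grad fs z) \<le> norm (grad f0 x - grad f0 z) + norm (transpose A *v lamf (A *v x) - transpose A *v lamf (A *v z))"
    unfolding f_grad gradf_def
    by (rule order_trans[OF _ norm_triangle_ineq]) (simp add: algebra_simps)
  also have "\<dots> \<le> Lc * norm (x - z)" using a b by (simp add: Lc_def algebra_simps)
  finally show ?thesis .
qed

lemma f_cont: "continuous_on UNIV fs"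
proof (rule continuous_at_imp_continuous_on, intro ballI)
  fix x :: "real^'n" show "isCont fs x" by (rule has_derivative_continuous[OF f_deriv])
qed


definition qx :: "real^'n \<Rightarrow> real" where
  "qx z = (z - xbar) \<bullet> (Mx *v (z - xbar)) / (2 * \<sigma>)"

definition Px :: "real^'n \<Rightarrow> real^'n" where
  "Px z = (1 / \<sigma>) *\<^sub>R (Mx *v (z - xbar))"

abbreviation ph :: "real^'n \<Rightarrow> ereal" where "ph \<equiv> phin g Mx xbar \<sigma>"

lemma lmx_pos: "0 < lam_min Mx" by (rule rayleigh(3)[OF Mx_pd])

lemma ph_eq: "ph z = g z + ereal (qx z)"
  by (simp add: phin_def pnorm_sq[OF Mx_pd] qx_def)

lemma qx_exp: "qx (x + d) = qx x + Px x \<bullet> d + d \<bullet> (Mx *v d) / (2 * \<sigma>)"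
  unfolding qx_def Px_def using qexp[OF Mx_sym, of x d xbar \<sigma>] by simp

lemma qx_exp2: "qx z = qx x + Px x \<bullet> (z - x) + (z - x) \<bullet> (Mx *v (z - x)) / (2 * \<sigma>)"
  using qx_exp[of x "z - x"] by simp

lemma quadMx_ge: "lam_min Mx / (2 * \<sigma>) * (norm v)\<^sup>2 \<le> v \<bullet> (Mx *v v) / (2 * \<sigma>)"
proof -
  have "lam_min Mx * (norm v)\<^sup>2 / (2 * \<sigma>) \<le> v \<bullet> (Mx *v v) / (2 * \<sigma>)"
    using rayleigh(2)[OF Mx_pd, of v] \<sigma>_pos by (intro divide_right_mono) auto
  then show ?thesis by simp
qed

lemma qx_cont: "continuous_on UNIV qx"
proof -
  have c: "continuous_on UNIV (\<lambda>l. (l - xbar) \<bullet> (Mx *v (l - xbar)))" by (rule continuous_quad)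
  show ?thesis
    using continuous_on_divide[OF c continuous_on_const[of UNIV "2 * \<sigma>"]] \<sigma>_pos
    unfolding qx_def[abs_def] by simp
qed

lemma qx_lower: "lam_min Mx / (2 * \<sigma>) * (norm z)\<^sup>2 - (lam_min Mx / \<sigma> * norm xbar) * norm z \<le> qx z"
  unfolding qx_def by (rule quad_lower[OF Mx_pd \<sigma>_pos])

lemma ereal_shuffle: "ereal a + (G + ereal b) = ereal (a + b) + G"
  by (cases G) auto

definition Jw :: "real^'n \<Rightarrow> real^'n \<Rightarrow> ereal" where
  "Jw w z = ereal (Lc / 2 * (norm (z - w))\<^sup>2) + ph z"

lemma Jw_eq: "Jw w z = ereal (Lc / 2 * (norm (z - w))\<^sup>2 + qx z) + g z"
  by (simp add: Jw_def ph_eq ereal_shuffle)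

lemma g_lower: "\<exists>K0 K1. \<forall>z. ereal (- K1 * norm z - K0) \<le> g z"
proof -
  obtain b a where ba: "\<And>z. ereal (b \<bullet> z - a) \<le> g z" using g_aff by blast
  have "ereal (- norm b * norm z - a) \<le> g z" for z
  proof -
    have "- norm b * norm z \<le> b \<bullet> z" using norm_cauchy_schwarz[of "-b" z] by simp
    then have "ereal (- norm b * norm z - a) \<le> ereal (b \<bullet> z - a)" by simp
    then show ?thesis using ba[of z] by (rule order_trans)
  qed
  then show ?thesis by blast
qed

lemma Jw_exists: "\<exists>p. \<forall>z. Jw w p \<le> Jw w z"
proof -
  obtain K0 K1 where gl: "\<And>z. ereal (- K1 * norm z - K0) \<le> g z" using g_lower by blast
  obtain x0 where x0: "g x0 \<noteq> \<infinity>" using g_fin by blast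
  show ?thesis
  proof (rule exists_min)
    have "continuous_on UNIV (\<lambda>z. Lc / 2 * (norm (z - w))\<^sup>2 + qx z)"
      by (intro continuous_intros qx_cont)
    then show "closed {(x, t::real). Jw w x \<le> ereal t}"
      unfolding Jw_eq by (rule closed_epi_add[OF g_closed])
    show "Jw w x0 \<noteq> \<infinity>" using x0 g_ninf[of x0] by (cases "g x0") (auto simp: Jw_eq)
    show "0 < lam_min Mx / (2 * \<sigma>)" using lmx_pos \<sigma>_pos by simp
    fix z
    have "lam_min Mx / (2 * \<sigma>) * (norm z)\<^sup>2 - (lam_min Mx / \<sigma> * norm xbar) * norm z \<le> Lc / 2 * (norm (z - w))\<^sup>2 + qx z"
    proof -
      have "0 \<le> Lc / 2 * (norm (z - w))\<^sup>2" using Lc_pos by simp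
      then show ?thesis using qx_lower[of z] by linarith
    qed
    then have "ereal (lam_min Mx / (2 * \<sigma>) * (norm z)\<^sup>2 - (lam_min Mx / \<sigma> * norm xbar + K1) * norm z - K0)
        \<le> ereal (Lc / 2 * (norm (z - w))\<^sup>2 + qx z) + ereal (- K1 * norm z - K0)"
      by (simp add: algebra_simps)
    also have "\<dots> \<le> Jw w z" unfolding Jw_eq by (intro add_left_mono gl)
    finally show "ereal (lam_min Mx / (2 * \<sigma>) * (norm z)\<^sup>2 - (lam_min Mx / \<sigma> * norm xbar + K1) * norm z - K0) \<le> Jw w z" .
  qed
qed


lemma norm_shift: "Lc / 2 * (norm (p + t *\<^sub>R v - w))\<^sup>2 =
    Lc / 2 * (norm (p - w))\<^sup>2 + t * ((Lc *\<^sub>R (p - w)) \<bullet> v) + t\<^sup>2 * (Lc / 2 * (norm v)\<^sup>2)"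
proof -
  have e: "p + t *\<^sub>R v - w = (p - w) + t *\<^sub>R v" by (simp add: algebra_simps)
  have "(norm ((p - w) + t *\<^sub>R v))\<^sup>2 = ((p - w) + t *\<^sub>R v) \<bullet> ((p - w) + t *\<^sub>R v)"
    by (rule power2_norm_eq_inner)
  also have "\<dots> = (p - w) \<bullet> (p - w) + 2 * t * ((p - w) \<bullet> v) + t\<^sup>2 * (v \<bullet> v)"
    by (simp add: inner_add_left inner_add_right inner_commute power2_eq_square algebra_simps)
  finally have N: "(norm (p + t *\<^sub>R v - w))\<^sup>2 = (norm (p - w))\<^sup>2 + 2 * t * ((p - w) \<bullet> v) + t\<^sup>2 * (norm v)\<^sup>2"
    unfolding e by (simp add: power2_norm_eq_inner)
  show ?thesis unfolding N by (simp add: algebra_simps)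
qed

lemma Jw_strong:
  assumes mn: "\<forall>z. Jw w p \<le> Jw w z"
  shows "\<exists>gp. g p = ereal gp \<and> (\<forall>z. ereal (gp + qx p + (Lc *\<^sub>R (w - p)) \<bullet> (z - p) + lam_min Mx / (2 * \<sigma>) * (norm (z - p))\<^sup>2) \<le> ph z)"
proof -
  obtain x0 where x0: "g x0 \<noteq> \<infinity>" using g_fin by blast
  have "Jw w x0 \<noteq> \<infinity>" using x0 g_ninf[of x0] by (cases "g x0") (auto simp: Jw_eq)
  then have "Jw w p \<noteq> \<infinity>" using mn by (metis ereal_infty_less(1) less_le_trans order_less_le top_greatest)
  then have "g p \<noteq> \<infinity>" by (auto simp: Jw_eq)
  then obtain gp where gp: "g p = ereal gp" using g_ninf[of p] by (cases "g p") auto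
  define S where "S z = Lc / 2 * (norm (z - w))\<^sup>2 + qx z" for z
  define D where "D = Lc *\<^sub>R (p - w) + Px p"
  have sub: "ereal (gp - D \<bullet> (z - p)) \<le> g z" for z
  proof (rule opt_subgrad[OF g_cvx g_ninf gp])
    show "\<And>z. ereal (S p) + g p \<le> ereal (S z) + g z" using mn by (simp add: Jw_eq S_def)
    fix t :: real assume "0 < t" "t \<le> 1"
    define v where "v = z - p"
    have "S (p + t *\<^sub>R v) = S p + t * (D \<bullet> v) + t\<^sup>2 * (Lc / 2 * (norm v)\<^sup>2 + v \<bullet> (Mx *v v) / (2 * \<sigma>))"
      unfolding S_def norm_shift qx_exp D_def
      by (simp add: inner_add_left matrix_vector_mult_scaleR power2_eq_square algebra_simps)
    then show "S (p + t *\<^sub>R (z - p)) \<le> S p + t * (D \<bullet> (z - p)) + t\<^sup>2 * (Lc / 2 * (norm (z - p))\<^sup>2 + (z - p) \<bullet> (Mx *v (z - p)) / (2 * \<sigma>))"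
      by (simp add: v_def)
  qed
  have "ereal (gp + qx p + (Lc *\<^sub>R (w - p)) \<bullet> (z - p) + lam_min Mx / (2 * \<sigma>) * (norm (z - p))\<^sup>2) \<le> ph z" for z
  proof (cases "g z")
    case PInf then show ?thesis by (simp add: ph_eq)
  next
    case MInf then show ?thesis using g_ninf[of z] by simp
  next
    case (real r)
    have r: "gp - D \<bullet> (z - p) \<le> r" using sub[of z] real by simp
    have q: "qx z = qx p + Px p \<bullet> (z - p) + (z - p) \<bullet> (Mx *v (z - p)) / (2 * \<sigma>)" by (rule qx_exp2)
    have m: "lam_min Mx / (2 * \<sigma>) * (norm (z - p))\<^sup>2 \<le> (z - p) \<bullet> (Mx *v (z - p)) / (2 * \<sigma>)" by (rule quadMx_ge)
    have d: "D \<bullet> (z - p) = - ((Lc *\<^sub>R (w - p)) \<bullet> (z - p)) + Px p \<bullet> (z - p)"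
      by (simp add: D_def inner_add_left inner_diff_left algebra_simps)
    have "gp + qx p + (Lc *\<^sub>R (w - p)) \<bullet> (z - p) + lam_min Mx / (2 * \<sigma>) * (norm (z - p))\<^sup>2 \<le> r + qx z"
      using r q m d by linarith
    then show ?thesis using real by (simp add: ph_eq)
  qed
  then show ?thesis using gp by blast
qed

lemma Jw_unique:
  assumes mn: "\<forall>z. Jw w p \<le> Jw w z" and mn': "\<forall>z. Jw w p' \<le> Jw w z"
  shows "p' = p"
proof -
  obtain gp where gp: "g p = ereal gp" and st: "\<And>z. ereal (gp + qx p + (Lc *\<^sub>R (w - p)) \<bullet> (z - p) + lam_min Mx / (2 * \<sigma>) * (norm (z - p))\<^sup>2) \<le> ph z"
    using Jw_strong[OF mn] by blast
  define v where "v = p' - p"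
  have ns: "Lc / 2 * (norm (p' - w))\<^sup>2 = Lc / 2 * (norm (p - w))\<^sup>2 + (Lc *\<^sub>R (p - w)) \<bullet> v + Lc / 2 * (norm v)\<^sup>2"
    using norm_shift[of p 1 v w] by (simp add: v_def)
  define Jp where "Jp = Lc / 2 * (norm (p - w))\<^sup>2 + qx p + gp"
  define \<mu> where "\<mu> = lam_min Mx / (2 * \<sigma>)"
  have Jp: "Jw w p = ereal Jp" by (simp add: Jw_eq gp Jp_def)
  have ii: "(Lc *\<^sub>R (w - p)) \<bullet> v = - ((Lc *\<^sub>R (p - w)) \<bullet> v)" by (simp add: inner_diff_left algebra_simps)
  have eqr: "Jp + Lc / 2 * (norm v)\<^sup>2 + \<mu> * (norm v)\<^sup>2 =
      Lc / 2 * (norm (p' - w))\<^sup>2 + (gp + qx p + (Lc *\<^sub>R (w - p)) \<bullet> v + \<mu> * (norm v)\<^sup>2)"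
    using ns ii unfolding Jp_def by linarith
  have "ereal (Jp + Lc / 2 * (norm v)\<^sup>2 + \<mu> * (norm v)\<^sup>2) =
      ereal (Lc / 2 * (norm (p' - w))\<^sup>2) + ereal (gp + qx p + (Lc *\<^sub>R (w - p)) \<bullet> v + \<mu> * (norm v)\<^sup>2)"
    by (simp only: plus_ereal.simps(1) eqr)
  also have "\<dots> \<le> ereal (Lc / 2 * (norm (p' - w))\<^sup>2) + ph p'"
    using st[of p'] by (intro add_left_mono) (simp add: v_def \<mu>_def)
  also have "\<dots> = Jw w p'" by (simp add: Jw_def)
  also have "\<dots> \<le> Jw w p" using mn' by simp
  finally have "Jp + Lc / 2 * (norm v)\<^sup>2 + \<mu> * (norm v)\<^sup>2 \<le> Jp" by (simp add: Jp)
  moreover have "0 \<le> Lc / 2 * (norm v)\<^sup>2" using Lc_pos by simp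
  moreover have "0 < \<mu>" using lmx_pos \<sigma>_pos by (simp add: \<mu>_def)
  ultimately have "(norm v)\<^sup>2 \<le> 0"
    by (smt (verit, best) mult_pos_pos zero_less_power2)
  then show ?thesis by (simp add: v_def)
qed


definition wx :: "real^'n \<Rightarrow> real^'n" where
  "wx x = x - (1 / Lc) *\<^sub>R grad fs x"

definition prox :: "real^'n \<Rightarrow> real^'n" where
  "prox x = (SOME p. \<forall>z. Jw (wx x) p \<le> Jw (wx x) z)"

lemma prox_min: "\<forall>z. Jw (wx x) (prox x) \<le> Jw (wx x) z"
  using someI_ex[OF Jw_exists[of "wx x"]] unfolding prox_def by blast

lemma GF_prox: "GF Lc fs ph x = prox x"
  unfolding GF_def
proof (rule the_equality)
  show "\<forall>z. ereal (Lc / 2 * (norm (prox x - (x - (1 / Lc) *\<^sub>R grad fs x)))\<^sup>2) + ph (prox x)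
        \<le> ereal (Lc / 2 * (norm (z - (x - (1 / Lc) *\<^sub>R grad fs x)))\<^sup>2) + ph z"
    using prox_min[of x] by (simp add: Jw_def wx_def)
next
  fix y assume "\<forall>z. ereal (Lc / 2 * (norm (y - (x - (1 / Lc) *\<^sub>R grad fs x)))\<^sup>2) + ph y
        \<le> ereal (Lc / 2 * (norm (z - (x - (1 / Lc) *\<^sub>R grad fs x)))\<^sup>2) + ph z"
  then have "\<forall>z. Jw (wx x) y \<le> Jw (wx x) z" by (simp add: Jw_def wx_def)
  then show "y = prox x" using Jw_unique[OF prox_min] by blast
qed

abbreviation Fo :: "real^'n \<Rightarrow> ereal" where "Fo \<equiv> Fobj f0 g h A Mx Ml xbar lbar \<sigma>"

lemma Fo_eq: "Fo z = ereal (fs z + qx z) + g z"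
  by (simp add: Fobj_def ph_eq ereal_shuffle)

lemma Fo_eq2: "Fo z = ereal (fs z) + ph z"
  by (simp add: Fobj_def)

lemma F_exists: "\<exists>p. \<forall>z. Fo p \<le> Fo z"
proof -
  obtain K0 K1 where gl: "\<And>z. ereal (- K1 * norm z - K0) \<le> g z" using g_lower by blast
  obtain x0 where x0: "g x0 \<noteq> \<infinity>" using g_fin by blast
  show ?thesis
  proof (rule exists_min)
    have "continuous_on UNIV (\<lambda>z. fs z + qx z)"
      by (intro continuous_on_add f_cont qx_cont)
    then show "closed {(x, t::real). Fo x \<le> ereal t}"
      unfolding Fo_eq by (rule closed_epi_add[OF g_closed])
    show "Fo x0 \<noteq> \<infinity>" using x0 g_ninf[of x0] by (cases "g x0") (auto simp: Fo_eq)
    show "0 < lam_min Mx / (2 * \<sigma>)" using lmx_pos \<sigma>_pos by simp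
    fix z
    have t: "fs 0 + grad fs 0 \<bullet> (z - 0) \<le> fs z" by (rule f_tangent)
    have c: "- (norm (grad fs 0) * norm z) \<le> grad fs 0 \<bullet> z" using norm_cauchy_schwarz[of "- grad fs 0" z] by simp
    have "lam_min Mx / (2 * \<sigma>) * (norm z)\<^sup>2 - (lam_min Mx / \<sigma> * norm xbar + norm (grad fs 0) + K1) * norm z - (K0 - fs 0)
        \<le> fs z + qx z + (- K1 * norm z - K0)"
      using qx_lower[of z] t c by (simp add: algebra_simps)
    then have "ereal (lam_min Mx / (2 * \<sigma>) * (norm z)\<^sup>2 - (lam_min Mx / \<sigma> * norm xbar + norm (grad fs 0) + K1) * norm z - (K0 - fs 0))
        \<le> ereal (fs z + qx z) + ereal (- K1 * norm z - K0)" by simp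
    also have "\<dots> \<le> Fo z" unfolding Fo_eq by (intro add_left_mono gl)
    finally show "ereal (lam_min Mx / (2 * \<sigma>) * (norm z)\<^sup>2 - (lam_min Mx / \<sigma> * norm xbar + norm (grad fs 0) + K1) * norm z - (K0 - fs 0)) \<le> Fo z" .
  qed
qed

lemma F_strong:
  assumes mn: "\<forall>z. Fo p \<le> Fo z"
  shows "\<exists>Fp. Fo p = ereal Fp \<and> (\<forall>z. ereal (Fp + lam_min Mx / (2 * \<sigma>) * (norm (z - p))\<^sup>2) \<le> Fo z)"
proof -
  obtain x0 where x0: "g x0 \<noteq> \<infinity>" using g_fin by blast
  have "Fo x0 \<noteq> \<infinity>" using x0 g_ninf[of x0] by (cases "g x0") (auto simp: Fo_eq)
  then have "Fo p \<noteq> \<infinity>" using mn by (metis ereal_infty_less(1) less_le_trans order_less_le top_greatest)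
  then have "g p \<noteq> \<infinity>" by (auto simp: Fo_eq)
  then obtain gp where gp: "g p = ereal gp" using g_ninf[of p] by (cases "g p") auto
  define S where "S z = fs z + qx z" for z
  define D where "D = grad fs p + Px p"
  have sub: "ereal (gp - D \<bullet> (z - p)) \<le> g z" for z
  proof (rule opt_subgrad[OF g_cvx g_ninf gp])
    show "\<And>z. ereal (S p) + g p \<le> ereal (S z) + g z" using mn by (simp add: Fo_eq S_def)
    fix t :: real assume "0 < t" "t \<le> 1"
    define v where "v = z - p"
    have a: "fs (p + t *\<^sub>R v) \<le> fs p + grad fs p \<bullet> (t *\<^sub>R v) + Lc / 2 * (norm (t *\<^sub>R v))\<^sup>2" by (rule f_descent)
    have b: "qx (p + t *\<^sub>R v) = qx p + Px p \<bullet> (t *\<^sub>R v) + (t *\<^sub>R v) \<bullet> (Mx *v (t *\<^sub>R v)) / (2 * \<sigma>)" by (rule qx_exp)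
    have c: "grad fs p \<bullet> (t *\<^sub>R v) + Px p \<bullet> (t *\<^sub>R v) = t * (D \<bullet> v)" by (simp add: D_def inner_add_left distrib_left)
    have d: "Lc / 2 * (norm (t *\<^sub>R v))\<^sup>2 + (t *\<^sub>R v) \<bullet> (Mx *v (t *\<^sub>R v)) / (2 * \<sigma>)
        = t\<^sup>2 * (Lc / 2 * (norm v)\<^sup>2 + v \<bullet> (Mx *v v) / (2 * \<sigma>))"
      by (simp add: matrix_vector_mult_scaleR power2_eq_square algebra_simps)
    have "S (p + t *\<^sub>R v) \<le> S p + t * (D \<bullet> v) + t\<^sup>2 * (Lc / 2 * (norm v)\<^sup>2 + v \<bullet> (Mx *v v) / (2 * \<sigma>))"
      unfolding S_def using a b c d by linarith
    then show "S (p + t *\<^sub>R (z - p)) \<le> S p + t * (D \<bullet> (z - p)) + t\<^sup>2 * (Lc / 2 * (norm (z - p))\<^sup>2 + (z - p) \<bullet> (Mx *v (z - p)) / (2 * \<sigma>))"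
      by (simp add: v_def)
  qed
  define Fp where "Fp = fs p + qx p + gp"
  have "ereal (Fp + lam_min Mx / (2 * \<sigma>) * (norm (z - p))\<^sup>2) \<le> Fo z" for z
  proof (cases "g z")
    case PInf then show ?thesis by (simp add: Fo_eq)
  next
    case MInf then show ?thesis using g_ninf[of z] by simp
  next
    case (real r)
    have r: "gp - D \<bullet> (z - p) \<le> r" using sub[of z] real by simp
    have q: "qx z = qx p + Px p \<bullet> (z - p) + (z - p) \<bullet> (Mx *v (z - p)) / (2 * \<sigma>)" by (rule qx_exp2)
    have m: "lam_min Mx / (2 * \<sigma>) * (norm (z - p))\<^sup>2 \<le> (z - p) \<bullet> (Mx *v (z - p)) / (2 * \<sigma>)" by (rule quadMx_ge)
    have t: "fs p + grad fs p \<bullet> (z - p) \<le> fs z" by (rule f_tangent)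
    have d: "D \<bullet> (z - p) = grad fs p \<bullet> (z - p) + Px p \<bullet> (z - p)" by (simp add: D_def inner_add_left)
    have "Fp + lam_min Mx / (2 * \<sigma>) * (norm (z - p))\<^sup>2 \<le> fs z + qx z + r"
      unfolding Fp_def using r q m t d by linarith
    then show ?thesis using real by (simp add: Fo_eq)
  qed
  moreover have "Fo p = ereal Fp" by (simp add: Fo_eq gp Fp_def)
  ultimately show ?thesis by blast
qed

lemma F_sub:
  fixes y :: "real^'n"
  defines "xt \<equiv> prox y"
  defines "s \<equiv> Lc *\<^sub>R (wx y - xt) + grad fs xt"
  shows "\<exists>Fx. Fo xt = ereal Fx \<and> (\<forall>z. ereal (Fx + s \<bullet> (z - xt) + lam_min Mx / (2 * \<sigma>) * (norm (z - xt))\<^sup>2) \<le> Fo z)"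
proof -
  obtain gp where gp: "g xt = ereal gp" and st: "\<And>z. ereal (gp + qx xt + (Lc *\<^sub>R (wx y - xt)) \<bullet> (z - xt) + lam_min Mx / (2 * \<sigma>) * (norm (z - xt))\<^sup>2) \<le> ph z"
    using Jw_strong[OF prox_min[of y]] unfolding xt_def by blast
  define Fx where "Fx = fs xt + gp + qx xt"
  have "ereal (Fx + s \<bullet> (z - xt) + lam_min Mx / (2 * \<sigma>) * (norm (z - xt))\<^sup>2) \<le> Fo z" for z
  proof -
    have t: "fs xt + grad fs xt \<bullet> (z - xt) \<le> fs z" by (rule f_tangent)
    have e: "Fx + s \<bullet> (z - xt) + lam_min Mx / (2 * \<sigma>) * (norm (z - xt))\<^sup>2 =
       (fs xt + grad fs xt \<bullet> (z - xt)) + (gp + qx xt + (Lc *\<^sub>R (wx y - xt)) \<bullet> (z - xt) + lam_min Mx / (2 * \<sigma>) * (norm (z - xt))\<^sup>2)"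
      by (simp add: Fx_def s_def inner_add_left algebra_simps)
    have "ereal (Fx + s \<bullet> (z - xt) + lam_min Mx / (2 * \<sigma>) * (norm (z - xt))\<^sup>2) =
       ereal (fs xt + grad fs xt \<bullet> (z - xt)) + ereal (gp + qx xt + (Lc *\<^sub>R (wx y - xt)) \<bullet> (z - xt) + lam_min Mx / (2 * \<sigma>) * (norm (z - xt))\<^sup>2)"
      by (simp only: e plus_ereal.simps(1))
    also have "\<dots> \<le> ereal (fs z) + ph z"
      using t st[of z] by (intro add_mono) auto
    finally show ?thesis by (simp add: Fo_eq2)
  qed
  moreover have "Fo xt = ereal Fx" using gp by (simp add: Fo_eq Fx_def algebra_simps)
  ultimately show ?thesis by blast
qed


lemma norm_sq_add: "(norm (a + b))\<^sup>2 = (norm a)\<^sup>2 + 2 * (a \<bullet> b) + (norm (b::real^'n))\<^sup>2"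
proof -
  have "(norm (a + b))\<^sup>2 = (a + b) \<bullet> (a + b)" by (rule power2_norm_eq_inner)
  also have "\<dots> = a \<bullet> a + 2 * (a \<bullet> b) + b \<bullet> b" by (simp add: inner_add_left inner_add_right inner_commute)
  finally show ?thesis by (simp add: power2_norm_eq_inner)
qed

lemma prox_descent: "Fo (prox x) \<le> Fo z + ereal (Lc / 2 * (norm (z - x))\<^sup>2)"
proof -
  define p where "p = prox x"
  define G where "G = grad fs x"
  obtain gp where gp: "g p = ereal gp"
    using Jw_strong[OF prox_min[of x]] unfolding p_def by blast
  have idn: "Lc / 2 * (norm (u - wx x))\<^sup>2 = Lc / 2 * (norm (u - x))\<^sup>2 + G \<bullet> (u - x) + (norm G)\<^sup>2 / (2 * Lc)" for u
  proof -
    have "u - wx x = (u - x) + (1 / Lc) *\<^sub>R G" by (simp add: wx_def G_def algebra_simps)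
    then have "(norm (u - wx x))\<^sup>2 = (norm (u - x))\<^sup>2 + 2 * ((u - x) \<bullet> ((1 / Lc) *\<^sub>R G)) + (norm ((1 / Lc) *\<^sub>R G))\<^sup>2"
      by (simp only: norm_sq_add)
    then show ?thesis using Lc_pos by (simp add: power2_eq_square inner_commute field_simps)
  qed
  have fd: "fs p \<le> fs x + G \<bullet> (p - x) + Lc / 2 * (norm (p - x))\<^sup>2"
    using f_descent[of x "p - x"] by (simp add: G_def)
  have ft: "fs x + G \<bullet> (z - x) \<le> fs z" using f_tangent[of x z] by (simp add: G_def)
  have jm: "Jw (wx x) p \<le> Jw (wx x) z" using prox_min[of x] by (simp add: p_def)
  show ?thesis
  proof (cases "g z")
    case PInf then show ?thesis by (simp add: Fo_eq)
  next
    case MInf then show ?thesis using g_ninf[of z] by simp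
  next
    case (real r)
    have "Lc / 2 * (norm (p - wx x))\<^sup>2 + qx p + gp \<le> Lc / 2 * (norm (z - wx x))\<^sup>2 + qx z + r"
      using jm by (simp add: Jw_eq gp real)
    then have "fs p + qx p + gp \<le> fs z + qx z + r + Lc / 2 * (norm (z - x))\<^sup>2"
      using fd ft idn[of p] idn[of z] by linarith
    then show ?thesis using gp unfolding p_def by (simp add: Fo_eq real)
  qed
qed

end

lemma ereal_min_eq: "min (ereal a) (ereal b) = ereal (min a b)"
  by (cases "a \<le> b") (auto simp: min_def)

lemma final_num:
  fixes D Y E N X T rho lx lM s eta dl Lc :: real
  assumes lx: "lx > 0" and lM: "lM > 0" "lM \<le> lx" and s: "s > 0" and eta: "eta > 0"
    and dl: "dl > 0" and Lc: "Lc > 0"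
    and a: "D\<^sup>2 \<le> 2 * Lc * Y" "D \<ge> 0"
    and yb: "Y \<le> lx / s\<^sup>2 * min (eta\<^sup>2 / (4 * Lc)) (dl\<^sup>2 * lM / (2 * (1 + dl)\<^sup>2 * Lc\<^sup>2) * E)"
    and b: "E \<le> Lc / 2 * X\<^sup>2" "X \<ge> 0"
    and tri: "X \<le> T + rho" "T \<ge> 0" "rho \<ge> 0"
    and c: "(lx / s) * rho \<le> D"
    and d: "sqrt lx * T \<le> N"
  shows "D \<le> sqrt lx / s * min eta (dl * N)"
proof -
  define a where "a = sqrt lx"
  define bb where "bb = sqrt lM"
  define u where "u = lx / s\<^sup>2"
  define k where "k = dl\<^sup>2 * lM / (2 * (1 + dl)\<^sup>2 * Lc\<^sup>2)"
  have a0: "a > 0" using lx by (simp add: a_def)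
  have b0: "bb > 0" using lM by (simp add: bb_def)
  have aa: "a * a = lx" using lx by (simp add: a_def)
  have bba: "bb * bb = lM" using lM by (simp add: bb_def)
  have ba: "bb \<le> a" using lM by (simp add: a_def bb_def)
  have lxs: "u \<ge> 0" using lx s by (simp add: u_def)
  have L2: "0 \<le> 2 * Lc" using Lc by simp
  have ua: "u = (a / s)\<^sup>2" by (simp add: u_def power_divide aa[symmetric] power2_eq_square)
  have p1: "D \<le> a / s * eta"
  proof -
    have "Y \<le> u * (eta\<^sup>2 / (4 * Lc))"
      using yb mult_left_mono[OF min.cobounded1 lxs] unfolding u_def by (rule order_trans)
    then have "2 * Lc * Y \<le> 2 * Lc * (u * (eta\<^sup>2 / (4 * Lc)))" by (rule mult_left_mono[OF _ L2])
    also have "2 * Lc * (u * (eta\<^sup>2 / (4 * Lc))) = u * eta\<^sup>2 / 2" using Lc by simp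
    also have "u * eta\<^sup>2 = (a / s * eta)\<^sup>2" by (simp add: ua power_mult_distrib power_divide)
    finally have "D\<^sup>2 \<le> (a / s * eta)\<^sup>2 / 2" using a(1) by linarith
    moreover have "0 \<le> (a / s * eta)\<^sup>2" by simp
    ultimately have sq: "D\<^sup>2 \<le> (a / s * eta)\<^sup>2" by linarith
    have "0 \<le> a / s * eta" using a0 s eta by simp
    then show ?thesis by (rule power2_le_imp_le[OF sq])
  qed
  have p2: "D \<le> a / s * (dl * N)"
  proof -
    define \<beta> where "\<beta> = a / s * (bb * (dl / (1 + dl)))"
    have \<beta>0: "\<beta> \<ge> 0" using a0 b0 dl s by (simp add: \<beta>_def)
    have kL: "k * Lc\<^sup>2 = dl\<^sup>2 * lM / (2 * (1 + dl)\<^sup>2)" using Lc by (simp add: k_def)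
    have \<beta>2: "\<beta>\<^sup>2 = u * (lM * (dl / (1 + dl))\<^sup>2)"
    proof -
      have bb2: "bb\<^sup>2 = lM" using bba by (simp add: power2_eq_square)
      show ?thesis by (simp only: \<beta>_def ua bb2[symmetric] power_mult_distrib)
    qed
    have "Y \<le> u * (k * E)"
      using yb mult_left_mono[OF min.cobounded2 lxs] unfolding u_def k_def by (rule order_trans)
    also have "\<dots> \<le> u * (k * (Lc / 2 * X\<^sup>2))"
    proof (rule mult_left_mono[OF _ lxs], rule mult_left_mono[OF b(1)])
      show "0 \<le> k" using dl lM Lc by (simp add: k_def)
    qed
    finally have Yb: "Y \<le> u * (k * (Lc / 2 * X\<^sup>2))" .
    have eq: "2 * Lc * (u * (k * (Lc / 2 * X\<^sup>2))) = u * (k * Lc\<^sup>2) * X\<^sup>2"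
      by (simp add: power2_eq_square)
    have eq2: "u * (k * Lc\<^sup>2) * X\<^sup>2 = \<beta>\<^sup>2 * X\<^sup>2 / 2"
      unfolding kL \<beta>2 by (simp add: power_divide mult_ac)
    have "2 * Lc * Y \<le> 2 * Lc * (u * (k * (Lc / 2 * X\<^sup>2)))"
      by (rule mult_left_mono[OF Yb L2])
    then have "D\<^sup>2 \<le> \<beta>\<^sup>2 * X\<^sup>2 / 2" using a(1) eq eq2 by linarith
    moreover have "0 \<le> \<beta>\<^sup>2 * X\<^sup>2" by simp
    ultimately have "D\<^sup>2 \<le> \<beta>\<^sup>2 * X\<^sup>2" by linarith
    then have sq: "D\<^sup>2 \<le> (\<beta> * X)\<^sup>2" by (simp add: power_mult_distrib)
    have "0 \<le> \<beta> * X" using \<beta>0 b(2) by simp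
    then have DX: "D \<le> \<beta> * X" by (rule power2_le_imp_le[OF sq])
    have TN: "T \<le> N / a" using d a0 by (simp add: a_def pos_le_divide_eq mult.commute)
    have rD: "rho \<le> D * s / lx"
    proof -
      have "rho = (lx / s * rho) * s / lx" using lx s by simp
      also have "\<dots> \<le> D * s / lx" using c lx s by (intro divide_right_mono mult_right_mono) auto
      finally show ?thesis .
    qed
    have bX: "\<beta> * X \<le> \<beta> * (N / a + D * s / lx)"
      using tri(1) TN rD by (intro mult_left_mono[OF _ \<beta>0]) linarith
    define c1 where "c1 = bb * dl / (s * (1 + dl))"
    define c2 where "c2 = (bb / a) * (dl / (1 + dl))"
    have e1: "\<beta> * (N / a) = c1 * N" using a0 by (simp add: \<beta>_def c1_def)
    have e2: "\<beta> * (D * s / lx) = c2 * D" using a0 s by (simp add: \<beta>_def c2_def aa[symmetric] mult_ac)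
    have "c2 \<le> 1 * (dl / (1 + dl))" unfolding c2_def using ba a0 dl by (intro mult_right_mono) auto
    then have "c2 \<le> dl / (1 + dl)" by simp
    then have c2D: "c2 * D \<le> dl / (1 + dl) * D" using a(2) by (rule mult_right_mono)
    have "D \<le> c1 * N + dl / (1 + dl) * D"
      using DX bX e1 e2 c2D by (simp add: distrib_left)
    then have "D * (1 + dl) \<le> (c1 * N + dl / (1 + dl) * D) * (1 + dl)"
      using dl by (intro mult_right_mono) auto
    also have "\<dots> = c1 * N * (1 + dl) + dl * D" using dl by (simp add: distrib_right)
    finally have "D \<le> c1 * N * (1 + dl)" by (simp add: algebra_simps)
    also have "c1 * N * (1 + dl) = bb / s * (dl * N)" using dl by (simp add: c1_def)
    also have "\<dots> \<le> a / s * (dl * N)"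
    proof (rule mult_right_mono)
      show "bb / s \<le> a / s" using ba s by (simp add: divide_right_mono)
      have "0 \<le> sqrt lx * T" using tri(2) lx by simp
      then have "0 \<le> N" using d by linarith
      then show "0 \<le> dl * N" using dl by simp
    qed
    finally show ?thesis .
  qed
  have "a / s * min eta (dl * N) = min (a / s * eta) (a / s * (dl * N))"
    using a0 s by (simp add: min_mult_distrib_left)
  then show ?thesis using p1 p2 by (simp add: a_def)
qed


theorem proposition4:
  fixes f0 :: "real^'n \<Rightarrow> real" and g :: "real^'n \<Rightarrow> ereal" and h :: "real^'m \<Rightarrow> ereal"
    and A :: "real^'n^'m" and L0 :: real
    and Mx :: "real^'n^'n" and Ml :: "real^'m^'m"
    and xbar y :: "real^'n" and lbar :: "real^'m" and \<sigma> \<eta> \<delta> :: real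
  assumes f0_convex: "convex_on UNIV f0"
    and f0_diff: "\<forall>x. f0 differentiable (at x)"
    and L0_pos: "0 < L0"
    and f0_lip: "\<forall>x z. norm (grad f0 x - grad f0 z) \<le> L0 * norm (x - z)"
    and g_pcc: "proper_closed_convex g" and h_pcc: "proper_closed_convex h"
    and Omega_ne: "\<exists>x l. \<exists>v \<in> subgrad g x. \<exists>u \<in> subgrad (fconj h) l.
                      grad f0 x + v + transpose A *v l = 0 \<and> u - A *v x = 0"
    and Mx_pd: "sym_pd Mx" and Ml_pd: "sym_pd Ml"
    and M_max: "lam_max (blockdiag Mx Ml) = 1"
    and \<sigma>_pos: "0 < \<sigma>" and \<eta>_pos: "0 < \<eta>" and \<delta>_pos: "0 < \<delta>"
  defines "f \<equiv> fsm f0 h A Ml lbar \<sigma>"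
    and "\<phi> \<equiv> phin g Mx xbar \<sigma>"
    and "F \<equiv> Fobj f0 g h A Mx Ml xbar lbar \<sigma>"
    and "Fstar \<equiv> (INF x. Fobj f0 g h A Mx Ml xbar lbar \<sigma> x)"
    and "L \<equiv> L0 + \<sigma> / lam_min Ml * (onorm (\<lambda>x. A *v x))\<^sup>2"
    and "M \<equiv> blockdiag Mx Ml"
  assumes y_bound: "F y - Fstar \<le> ereal (lam_min Mx / \<sigma>\<^sup>2) *
      min (ereal (\<eta>\<^sup>2 / (4 * L)))
          (ereal (\<delta>\<^sup>2 * lam_min M / (2 * (1 + \<delta>)\<^sup>2 * L\<^sup>2)) * (F (GF L f \<phi> xbar) - Fstar))"
  shows "subgrad F (GF L f \<phi> y) \<noteq> {} \<and>
    infdist 0 (subgrad F (GF L f \<phi> y)) \<le> sqrt (lam_min Mx) / \<sigma> *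
      min \<eta> (\<delta> * pnorm M (stack (GF L f \<phi> y) (Lam f0 g h A Ml (GF L f \<phi> y) lbar \<sigma>)
                              - stack xbar lbar))"
  proof -
  interpret S: setting f0 g h A L0 Mx Ml xbar lbar \<sigma>
    by (rule setting.intro; fact)
  have L_eq: "L = S.Lc" by (simp add: L_def S.Lc_def)
  have GF_eq: "GF L f \<phi> x = S.prox x" for x
    unfolding L_eq f_def \<phi>_def by (rule S.GF_prox)
  have F_eq: "F z = S.Fo z" for z by (simp add: F_def)
  define lx where "lx = lam_min Mx"
  have lx0: "lx > 0" using S.lmx_pos by (simp add: lx_def)
  have lM0: "lam_min M > 0"
    using lam_M(2)[OF Mx_pd Ml_pd] S.lmx_pos S.lml_pos by (simp add: M_def)
  have lMx: "lam_min M \<le> lx" using lam_M(1)[OF Mx_pd Ml_pd] by (simp add: M_def lx_def)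
  obtain xs where xs: "\<forall>z. S.Fo xs \<le> S.Fo z" using S.F_exists by blast
  obtain Fs where Fs: "S.Fo xs = ereal Fs"
    and Fs_st: "\<forall>z. ereal (Fs + lam_min Mx / (2 * \<sigma>) * (norm (z - xs))\<^sup>2) \<le> S.Fo z"
    using S.F_strong[OF xs] by blast
  have Fstar_eq: "Fstar = ereal Fs"
  proof -
    have "(INF x. S.Fo x) = S.Fo xs"
    proof (rule antisym)
      show "(INF x. S.Fo x) \<le> S.Fo xs" by (rule INF_lower) simp
      show "S.Fo xs \<le> (INF x. S.Fo x)" using xs by (intro INF_greatest) auto
    qed
    then show ?thesis using Fs by (simp add: Fstar_def)
  qed
  define xt where "xt = S.prox y"
  define s where "s = S.Lc *\<^sub>R (S.wx y - xt) + grad S.fs xt"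
  obtain Fx where Fx: "S.Fo xt = ereal Fx"
    and Fx_st: "\<forall>z. ereal (Fx + s \<bullet> (z - xt) + lam_min Mx / (2 * \<sigma>) * (norm (z - xt))\<^sup>2) \<le> S.Fo z"
    using S.F_sub[of y] unfolding xt_def s_def by blast
  have s_sub: "s \<in> subgrad F xt"
    unfolding subgrad_def F_eq
  proof (intro CollectI conjI allI)
    show "\<bar>S.Fo xt\<bar> \<noteq> \<infinity>" using Fx by simp
    fix z
    have "0 \<le> lam_min Mx / (2 * \<sigma>) * (norm (z - xt))\<^sup>2" using S.lmx_pos \<sigma>_pos by simp
    then have "ereal (Fx + s \<bullet> (z - xt)) \<le> ereal (Fx + s \<bullet> (z - xt) + lam_min Mx / (2 * \<sigma>) * (norm (z - xt))\<^sup>2)"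
      by simp
    also have "\<dots> \<le> S.Fo z" using Fx_st by blast
    finally show "S.Fo xt + ereal (s \<bullet> (z - xt)) \<le> S.Fo z" using Fx by simp
  qed
  have GFy: "GF L f \<phi> y = xt" by (simp add: GF_eq xt_def)
  have Fxs: "Fs \<le> Fx"
  proof -
    have "S.Fo xs \<le> S.Fo xt" using xs by blast
    then show ?thesis using Fs Fx by simp
  qed
  obtain Fb where Fb: "S.Fo (S.prox xbar) = ereal Fb"
  proof -
    have "S.Fo (S.prox xbar) \<le> S.Fo xs + ereal (S.Lc / 2 * (norm (xs - xbar))\<^sup>2)" by (rule S.prox_descent)
    then have "S.Fo (S.prox xbar) \<noteq> \<infinity>" using Fs by auto
    moreover have "S.Fo xs \<le> S.Fo (S.prox xbar)" using xs by blast
    then have "S.Fo (S.prox xbar) \<noteq> -\<infinity>" using Fs by auto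
    ultimately show ?thesis using that by (cases "S.Fo (S.prox xbar)") auto
  qed
  have FbE: "Fb \<le> Fs + S.Lc / 2 * (norm (xs - xbar))\<^sup>2"
  proof -
    have "S.Fo (S.prox xbar) \<le> S.Fo xs + ereal (S.Lc / 2 * (norm (xs - xbar))\<^sup>2)" by (rule S.prox_descent)
    then show ?thesis using Fb Fs by simp
  qed
  define k where "k = \<delta>\<^sup>2 * lam_min M / (2 * (1 + \<delta>)\<^sup>2 * L\<^sup>2)"
  have Fb_eq: "F (GF L f \<phi> xbar) = ereal Fb" by (simp only: F_eq GF_eq Fb)
  have Fy_l: "F y = S.Fo y" by (rule F_eq)
  have yb1: "S.Fo y - ereal Fs \<le> ereal (lx / \<sigma>\<^sup>2) * min (ereal (\<eta>\<^sup>2 / (4 * L))) (ereal k * (ereal Fb - ereal Fs))"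
    using y_bound unfolding Fb_eq Fy_l Fstar_eq k_def lx_def M_def .
  have R: "ereal (lx / \<sigma>\<^sup>2) * min (ereal (\<eta>\<^sup>2 / (4 * L))) (ereal k * (ereal Fb - ereal Fs))
      = ereal (lx / \<sigma>\<^sup>2 * min (\<eta>\<^sup>2 / (4 * L)) (k * (Fb - Fs)))"
    by (simp only: ereal_minus(1) times_ereal.simps(1) ereal_min_eq)
  have yb0: "S.Fo y - ereal Fs \<le> ereal (lx / \<sigma>\<^sup>2 * min (\<eta>\<^sup>2 / (4 * L)) (k * (Fb - Fs)))"
    using yb1 unfolding R .
  obtain Fy where Fy: "S.Fo y = ereal Fy"
  proof -
    have "S.Fo y \<noteq> \<infinity>" using yb0 by auto
    moreover have "S.Fo xs \<le> S.Fo y" using xs by blast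
    then have "S.Fo y \<noteq> -\<infinity>" using Fs by auto
    ultimately show ?thesis using that by (cases "S.Fo y") auto
  qed
  have yb2: "Fy - Fs \<le> lx / \<sigma>\<^sup>2 * min (\<eta>\<^sup>2 / (4 * L)) (k * (Fb - Fs))"
    using yb0 unfolding Fy by (simp only: ereal_minus(1) ereal_less_eq(3))
  have yb: "Fy - Fs \<le> lx / \<sigma>\<^sup>2 * min (\<eta>\<^sup>2 / (4 * S.Lc)) (\<delta>\<^sup>2 * lam_min M / (2 * (1 + \<delta>)\<^sup>2 * S.Lc\<^sup>2) * (Fb - Fs))"
    using yb2 unfolding k_def L_eq .
  define dd where "dd = y - xt"
  define gg where "gg = grad S.fs y - grad S.fs xt"
  have s_eq: "s = S.Lc *\<^sub>R dd - gg"
    using S.Lc_pos by (simp add: s_def S.wx_def dd_def gg_def algebra_simps)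
  have gg_le: "norm gg \<le> S.Lc * norm dd" unfolding gg_def dd_def by (rule S.f_lip)
  have sdd: "Fx + s \<bullet> dd \<le> Fy"
  proof -
    have "ereal (Fx + s \<bullet> (y - xt) + lam_min Mx / (2 * \<sigma>) * (norm (y - xt))\<^sup>2) \<le> S.Fo y" using Fx_st by blast
    moreover have "0 \<le> lam_min Mx / (2 * \<sigma>) * (norm (y - xt))\<^sup>2" using S.lmx_pos \<sigma>_pos by simp
    ultimately show ?thesis using Fy by (simp add: dd_def)
  qed
  have D2: "(norm s)\<^sup>2 \<le> 2 * S.Lc * (Fy - Fs)"
  proof -
    have e0: "(norm s)\<^sup>2 = S.Lc\<^sup>2 * (dd \<bullet> dd) - 2 * S.Lc * (gg \<bullet> dd) + gg \<bullet> gg"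
      unfolding power2_norm_eq_inner s_eq
      by (simp add: inner_diff_left inner_diff_right inner_commute power2_eq_square algebra_simps)
    have e1: "(norm s)\<^sup>2 = S.Lc\<^sup>2 * (norm dd)\<^sup>2 - 2 * S.Lc * (gg \<bullet> dd) + (norm gg)\<^sup>2"
      unfolding e0 by (simp add: power2_norm_eq_inner)
    have e2: "s \<bullet> dd = S.Lc * (norm dd)\<^sup>2 - gg \<bullet> dd"
      unfolding s_eq by (simp add: inner_diff_left power2_norm_eq_inner)
    have "(norm gg)\<^sup>2 \<le> (S.Lc * norm dd)\<^sup>2" using gg_le by (intro power_mono) auto
    then have g2: "(norm gg)\<^sup>2 \<le> S.Lc\<^sup>2 * (norm dd)\<^sup>2" by (simp add: power_mult_distrib)
    have e3: "2 * S.Lc * (s \<bullet> dd) = 2 * (S.Lc\<^sup>2 * (norm dd)\<^sup>2) - 2 * S.Lc * (gg \<bullet> dd)"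
      unfolding e2 by (simp add: algebra_simps power2_eq_square)
    have "(norm s)\<^sup>2 \<le> 2 * S.Lc * (s \<bullet> dd)" using e1 e3 g2 by linarith
    also have "\<dots> \<le> 2 * S.Lc * (Fy - Fs)" using sdd Fxs S.Lc_pos by (intro mult_left_mono) auto
    finally show ?thesis .
  qed
  define rho where "rho = norm (xt - xs)"
  have rho_le: "(lx / \<sigma>) * rho \<le> norm s"
  proof -
    have "ereal (Fx + s \<bullet> (xs - xt) + lam_min Mx / (2 * \<sigma>) * (norm (xs - xt))\<^sup>2) \<le> S.Fo xs"
      using Fx_st by blast
    then have a1: "Fx + s \<bullet> (xs - xt) + lam_min Mx / (2 * \<sigma>) * (norm (xs - xt))\<^sup>2 \<le> Fs"
      using Fs by simp
    have "ereal (Fs + lam_min Mx / (2 * \<sigma>) * (norm (xt - xs))\<^sup>2) \<le> S.Fo xt"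
      using Fs_st by blast
    then have a2: "Fs + lam_min Mx / (2 * \<sigma>) * (norm (xt - xs))\<^sup>2 \<le> Fx"
      using Fx by simp
    have nr: "norm (xs - xt) = rho" by (simp add: rho_def norm_minus_commute)
    have "lam_min Mx / (2 * \<sigma>) * rho\<^sup>2 + lam_min Mx / (2 * \<sigma>) * rho\<^sup>2 \<le> - (s \<bullet> (xs - xt))"
      using a1 a2[unfolded rho_def[symmetric]] unfolding nr by linarith
    moreover have "lam_min Mx / (2 * \<sigma>) * rho\<^sup>2 + lam_min Mx / (2 * \<sigma>) * rho\<^sup>2 = (lx / \<sigma>) * rho * rho"
      by (simp add: lx_def power2_eq_square field_simps)
    moreover have "- (s \<bullet> (xs - xt)) \<le> norm s * rho"
      using norm_cauchy_schwarz[of s "xt - xs"] by (simp add: rho_def inner_diff_right)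
    ultimately have rr: "(lx / \<sigma>) * rho * rho \<le> norm s * rho" by linarith
    show ?thesis
    proof (cases "rho = 0")
      case True then show ?thesis by simp
    next
      case False
      then have "0 < rho" by (simp add: rho_def)
      then show ?thesis using rr by (rule mult_right_le_imp_le[rotated])
    qed
  qed
  have Nge: "sqrt lx * norm (xt - xbar) \<le> pnorm M (stack xt (Lam f0 g h A Ml xt lbar \<sigma>) - stack xbar lbar)"
    unfolding M_def stack_diff lx_def by (rule pnorm_stack_ge[OF Mx_pd Ml_pd])
  have main: "norm s \<le> sqrt lx / \<sigma> * min \<eta> (\<delta> * pnorm M (stack xt (Lam f0 g h A Ml xt lbar \<sigma>) - stack xbar lbar))"
  proof (rule final_num[where Y = "Fy - Fs" and E = "Fb - Fs" and X = "norm (xs - xbar)"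
        and T = "norm (xt - xbar)" and rho = rho and lM = "lam_min M" and Lc = S.Lc])
    show "0 < lx" by (rule lx0)
    show "0 < lam_min M" by (rule lM0)
    show "lam_min M \<le> lx" by (rule lMx)
    show "0 < \<sigma>" by (rule \<sigma>_pos)
    show "0 < \<eta>" by (rule \<eta>_pos)
    show "0 < \<delta>" by (rule \<delta>_pos)
    show "0 < S.Lc" by (rule S.Lc_pos)
    show "(norm s)\<^sup>2 \<le> 2 * S.Lc * (Fy - Fs)" by (rule D2)
    show "0 \<le> norm s" by simp
    show "Fy - Fs \<le> lx / \<sigma>\<^sup>2 * min (\<eta>\<^sup>2 / (4 * S.Lc)) (\<delta>\<^sup>2 * lam_min M / (2 * (1 + \<delta>)\<^sup>2 * S.Lc\<^sup>2) * (Fb - Fs))"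
      by (rule yb)
    show "Fb - Fs \<le> S.Lc / 2 * (norm (xs - xbar))\<^sup>2" using FbE by simp
    show "0 \<le> norm (xs - xbar)" by simp
    show "norm (xs - xbar) \<le> norm (xt - xbar) + rho"
      using norm_triangle_ineq[of "xt - xbar" "xs - xt"] by (simp add: rho_def norm_minus_commute algebra_simps)
    show "0 \<le> norm (xt - xbar)" by simp
    show "0 \<le> rho" by (simp add: rho_def)
    show "lx / \<sigma> * rho \<le> norm s" by (rule rho_le)
    show "sqrt lx * norm (xt - xbar) \<le> pnorm M (stack xt (Lam f0 g h A Ml xt lbar \<sigma>) - stack xbar lbar)"
      by (rule Nge)
  qed
  have "infdist 0 (subgrad F xt) \<le> dist 0 s" by (rule infdist_le[OF s_sub])
  then have "infdist 0 (subgrad F xt) \<le> norm s" by simp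
  then have "infdist 0 (subgrad F xt) \<le> sqrt (lam_min Mx) / \<sigma> * min \<eta> (\<delta> * pnorm M (stack xt (Lam f0 g h A Ml xt lbar \<sigma>) - stack xbar lbar))"
    using main unfolding lx_def by linarith
  moreover have "subgrad F xt \<noteq> {}" using s_sub by blast
  ultimately show ?thesis unfolding GFy by blast
qed

end
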